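(* (a) The set of pairs $(z,d)\in\omega^\omega\times\mathbb{R}^{\omega\times\omega}$ such that $d$ is a metric on $\omega$ and $z$ is a Cauchy sequence in $\langle\omega,d\rangle$ is $\boldsymbol{\Pi}^0_3$. (b) The set of triples $(g,d,d')\in\omega^\omega\times(\mathbb{R}^{\omega\times\omega})^2$ such that $d,d'$ are metrics on $\omega$ and $g:\langle\omega,d\rangle\to\langle\omega,d'\rangle$ is continuous is $\boldsymbol{\Pi}^0_3$. (c) $\mathcal{C}(\omega)$ is $\boldsymbol{\Pi}^1_1$ in $\omega^\omega\times(\mathbb{R}^{\omega\times\omega})^2$. (d) The relation $\preceq_{\mathrm{cdi}}$ on $\mathcal{C}(\omega)$, viewed as a subset of $(\omega^\omega)^2\times(\mathbb{R}^{\omega\times\omega})^4$, is the intersection of a $\boldsymbol{\Sigma}^1_1$ set and a $\boldsymbol{\Pi}^1_1$ set. (e) The relation $\approx_{\mathrm{cdi}}$ on $\mathcal{C}(\omega)$, viewed as a subset of $(\omega^\omega)^2\times(\mathbb{R}^{\omega\times\omega})^4$, is the intersection of a $\boldsymbol{\Sigma}^1_1$ set and a $\boldsymbol{\Pi}^1_1$ set.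
   Context: Metrics on $\omega$ are viewed as elements of $\mathbb{R}^{\omega\times\omega}$; functions $\omega\to\omega$ and sequences in $\omega$ are elements of $\omega^\omega$. A dense isometry is a distance-preserving map (not necessarily onto) with dense image. A function between metric spaces is Cauchy-continuous if it maps Cauchy sequences to Cauchy sequences. $\mathcal{C}(\omega)$ is the set of triples $(g,d,d')$ where $d,d'$ are metrics on $\omega$ and $g:\langle\omega,d\rangle\to\langle\omega,d'\rangle$ is Cauchy-continuous. On $\mathcal{C}(\omega)$: $(g_0,d_0,d'_0)\preceq_{\mathrm{cdi}}(g_1,d_1,d'_1)$ iff there are dense isometries $\iota:\langle\omega,d_0\rangle\to\langle\omega,d_1\rangle$ and $\iota':\langle\omega,d'_0\rangle\to\langle\omega,d'_1\rangle$ with $\iota'\circ g_0=g_1\circ\iota$; and $(g_0,d_0,d'_0)\approx_{\mathrm{cdi}}(g_1,d_1,d'_1)$ iff there is $(g,d,d')\in\mathcal{C}(\omega)$ with $(g_e,d_e,d'_e)\preceq_{\mathrm{cdi}}(g,d,d')$ for each $e\in\{0,1\}$. *)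

theory Defs
  imports "HOL-Analysis.Analysis"
begin

type_synonym nseq = "nat \<Rightarrow> nat"
type_synonym nmat = "nat \<times> nat \<Rightarrow> real"

fun Borel_Sigma :: "nat \<Rightarrow> 'a::topological_space set set" where
  "Borel_Sigma 0 = {}"
| "Borel_Sigma (Suc 0) = {S. open S}"
| "Borel_Sigma (Suc (Suc n)) =
     {(\<Union>i. A i) | A :: nat \<Rightarrow> 'a set. \<forall>i. - A i \<in> Borel_Sigma (Suc n)}"

definition Borel_Pi :: "nat \<Rightarrow> 'a::topological_space set set" where
  "Borel_Pi n = {S. - S \<in> Borel_Sigma n}"

definition Sigma11 :: "'a::topological_space set set" where
  "Sigma11 = {fst ` C | C :: ('a \<times> (nat \<Rightarrow> nat)) set. closed C}"

definition Pi11 :: "'a::topological_space set set" where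
  "Pi11 = {S. - S \<in> Sigma11}"

definition metric_on_nat :: "nmat \<Rightarrow> bool" where
  "metric_on_nat d \<longleftrightarrow>
     (\<forall>x y. 0 \<le> d (x, y)) \<and> (\<forall>x y. d (x, y) = 0 \<longleftrightarrow> x = y) \<and>
     (\<forall>x y. d (x, y) = d (y, x)) \<and> (\<forall>x y z. d (x, z) \<le> d (x, y) + d (y, z))"

definition cauchy_in :: "nmat \<Rightarrow> nseq \<Rightarrow> bool" where
  "cauchy_in d z \<longleftrightarrow> (\<forall>e>0. \<exists>N. \<forall>m\<ge>N. \<forall>n\<ge>N. d (z m, z n) < e)"

definition continuous_wrt :: "nmat \<Rightarrow> nmat \<Rightarrow> nseq \<Rightarrow> bool" where
  "continuous_wrt d d' g \<longleftrightarrow>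
     (\<forall>x. \<forall>e>0. \<exists>\<delta>>0. \<forall>y. d (x, y) < \<delta> \<longrightarrow> d' (g x, g y) < e)"

definition cauchy_continuous_wrt :: "nmat \<Rightarrow> nmat \<Rightarrow> nseq \<Rightarrow> bool" where
  "cauchy_continuous_wrt d d' g \<longleftrightarrow> (\<forall>z. cauchy_in d z \<longrightarrow> cauchy_in d' (g \<circ> z))"

definition dense_isometry :: "nmat \<Rightarrow> nmat \<Rightarrow> nseq \<Rightarrow> bool" where
  "dense_isometry d0 d1 \<iota> \<longleftrightarrow>
     (\<forall>x y. d1 (\<iota> x, \<iota> y) = d0 (x, y)) \<and> (\<forall>y. \<forall>e>0. \<exists>x. d1 (\<iota> x, y) < e)"

definition C_omega :: "(nseq \<times> nmat \<times> nmat) set" where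
  "C_omega = {(g, d, d'). metric_on_nat d \<and> metric_on_nat d' \<and> cauchy_continuous_wrt d d' g}"

definition cdi_le :: "nseq \<times> nmat \<times> nmat \<Rightarrow> nseq \<times> nmat \<times> nmat \<Rightarrow> bool" where
  "cdi_le p q \<longleftrightarrow> p \<in> C_omega \<and> q \<in> C_omega \<and>
     (case p of (g0, d0, d0') \<Rightarrow> case q of (g1, d1, d1') \<Rightarrow>
        (\<exists>\<iota> \<iota>'. dense_isometry d0 d1 \<iota> \<and> dense_isometry d0' d1' \<iota>' \<and> \<iota>' \<circ> g0 = g1 \<circ> \<iota>))"

definition cdi_approx :: "nseq \<times> nmat \<times> nmat \<Rightarrow> nseq \<times> nmat \<times> nmat \<Rightarrow> bool" where
  "cdi_approx p q \<longleftrightarrow> p \<in> C_omega \<and> q \<in> C_omega \<and>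
     (\<exists>r\<in>C_omega. cdi_le p r \<and> cdi_le q r)"

definition rel_set :: "(nseq \<times> nmat \<times> nmat \<Rightarrow> nseq \<times> nmat \<times> nmat \<Rightarrow> bool)
    \<Rightarrow> ((nseq \<times> nseq) \<times> (nmat \<times> nmat \<times> nmat \<times> nmat)) set" where
  "rel_set R = {((g0, g1), (d0, d0', d1, d1')). R (g0, d0, d0') (g1, d1, d1')}"

end

theory Submission
  imports Defs
begin

lemma cont_app:
  fixes f :: "'a::topological_space \<Rightarrow> nat \<Rightarrow> 'b::topological_space" and h :: "'a \<Rightarrow> nat"
  assumes f: "continuous_on UNIV f" and h: "continuous_on UNIV h"
  shows "continuous_on UNIV (\<lambda>x. f x (h x))"
  unfolding continuous_on_def
proof (intro ballI)
  fix x :: 'a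
  have c1: "((\<lambda>y. f y (h x)) \<longlongrightarrow> f x (h x)) (at x within UNIV)"
    using continuous_on_product_then_coordinatewise[OF f, of "h x"] unfolding continuous_on_def by simp
  have "(h \<longlongrightarrow> h x) (at x within UNIV)" using h unfolding continuous_on_def by simp
  then have ev: "\<forall>\<^sub>F y in at x within UNIV. h y = h x" by (simp add: tendsto_discrete)
  have "\<forall>\<^sub>F y in at x within UNIV. f y (h x) = f y (h y)" using ev by (auto elim: eventually_mono)
  then show "((\<lambda>x. f x (h x)) \<longlongrightarrow> f x (h x)) (at x within UNIV)" using c1 by (simp add: tendsto_cong)
qed

lemma cont_app2:
  fixes f :: "'a::topological_space \<Rightarrow> nat \<times> nat \<Rightarrow> 'b::topological_space" and h1 h2 :: "'a \<Rightarrow> nat"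
  assumes f: "continuous_on UNIV f" and h1: "continuous_on UNIV h1" and h2: "continuous_on UNIV h2"
  shows "continuous_on UNIV (\<lambda>x. f x (h1 x, h2 x))"
  unfolding continuous_on_def
proof (intro ballI)
  fix x :: 'a
  have c1: "((\<lambda>y. f y (h1 x, h2 x)) \<longlongrightarrow> f x (h1 x, h2 x)) (at x within UNIV)"
    using continuous_on_product_then_coordinatewise[OF f, of "(h1 x, h2 x)"] unfolding continuous_on_def by simp
  have "(h1 \<longlongrightarrow> h1 x) (at x within UNIV)" using h1 unfolding continuous_on_def by simp
  then have ev1: "\<forall>\<^sub>F y in at x within UNIV. h1 y = h1 x" by (simp add: tendsto_discrete)
  have "(h2 \<longlongrightarrow> h2 x) (at x within UNIV)" using h2 unfolding continuous_on_def by simp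
  then have ev2: "\<forall>\<^sub>F y in at x within UNIV. h2 y = h2 x" by (simp add: tendsto_discrete)
  have "\<forall>\<^sub>F y in at x within UNIV. f y (h1 x, h2 x) = f y (h1 y, h2 y)"
    using eventually_conj[OF ev1 ev2] by (auto elim: eventually_mono)
  then show "((\<lambda>x. f x (h1 x, h2 x)) \<longlongrightarrow> f x (h1 x, h2 x)) (at x within UNIV)" using c1 by (simp add: tendsto_cong)
qed

lemma closed_vim: "continuous_on UNIV f \<Longrightarrow> closed S \<Longrightarrow> closed (f -` S)"
  using continuous_on_closed_vimage[of UNIV f] by auto

lemma sig_closed: "closed S \<Longrightarrow> S \<in> Sigma11"
  unfolding Sigma11_def
  by (rule CollectI, rule exI[of _ "S \<times> (UNIV::nseq set)"]) (auto simp: closed_Times)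

lemma sig_vimage:
  assumes f: "continuous_on UNIV f" and S: "S \<in> Sigma11"
  shows "f -` S \<in> Sigma11"
proof -
  obtain C :: "(_ \<times> nseq) set" where C: "closed C" "S = fst ` C" using S unfolding Sigma11_def by auto
  let ?g = "\<lambda>p. (f (fst p), snd p)"
  have cg: "continuous_on UNIV ?g"
    by (intro continuous_intros continuous_on_compose2[OF f]) auto
  have "closed (?g -` C)" by (rule closed_vim[OF cg C(1)])
  moreover have "f -` S = fst ` (?g -` C)"
  proof
    show "f -` S \<subseteq> fst ` (?g -` C)"
    proof
      fix y assume "y \<in> f -` S"
      then obtain w where "(f y, w) \<in> C" unfolding C(2) by force
      then have "(y, w) \<in> ?g -` C" by simp
      then show "y \<in> fst ` (?g -` C)" by (metis fst_conv image_eqI)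
    qed
  qed (force simp: C(2))
  ultimately show ?thesis unfolding Sigma11_def by blast
qed

definition tlw :: "nseq \<Rightarrow> nseq" where "tlw w = (\<lambda>n. w (Suc n))"
definition evw :: "nseq \<Rightarrow> nseq" where "evw w = (\<lambda>n. w (2*n))"
definition odw :: "nseq \<Rightarrow> nseq" where "odw w = (\<lambda>n. w (Suc (2*n)))"
definition mergew :: "nseq \<Rightarrow> nseq \<Rightarrow> nseq" where
  "mergew u v = (\<lambda>n. if even n then u (n div 2) else v (n div 2))"
definition compw :: "nat \<Rightarrow> nseq \<Rightarrow> nseq" where "compw i w = (\<lambda>n. w (prod_encode (i, n)))"

lemma evw_merge[simp]: "evw (mergew u v) = u" by (auto simp: evw_def mergew_def)
lemma odw_merge[simp]: "odw (mergew u v) = v" by (auto simp: odw_def mergew_def)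

lemma cont_tlw: "continuous_on UNIV tlw"
  unfolding tlw_def by (intro continuous_on_coordinatewise_then_product) simp
lemma cont_evw: "continuous_on UNIV evw"
  unfolding evw_def by (intro continuous_on_coordinatewise_then_product) simp
lemma cont_odw: "continuous_on UNIV odw"
  unfolding odw_def by (intro continuous_on_coordinatewise_then_product) simp
lemma cont_compw: "continuous_on UNIV (compw i)"
  unfolding compw_def by (intro continuous_on_coordinatewise_then_product) simp

lemma cont_tlw'[continuous_intros]: "continuous_on UNIV f \<Longrightarrow> continuous_on UNIV (\<lambda>x. tlw (f x))"
  using continuous_on_compose2[OF cont_tlw] by auto
lemma cont_evw'[continuous_intros]: "continuous_on UNIV f \<Longrightarrow> continuous_on UNIV (\<lambda>x. evw (f x))"
  using continuous_on_compose2[OF cont_evw] by auto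
lemma cont_odw'[continuous_intros]: "continuous_on UNIV f \<Longrightarrow> continuous_on UNIV (\<lambda>x. odw (f x))"
  using continuous_on_compose2[OF cont_odw] by auto
lemma cont_compw'[continuous_intros]: "continuous_on UNIV f \<Longrightarrow> continuous_on UNIV (\<lambda>x. compw i (f x))"
  using continuous_on_compose2[OF cont_compw] by auto
lemma cont_UNIV_comp: "continuous_on UNIV g \<Longrightarrow> continuous_on UNIV f \<Longrightarrow> continuous_on UNIV (\<lambda>x. g (f x))"
  using continuous_on_compose2[of UNIV g] by auto

lemma open_vim: "continuous_on UNIV f \<Longrightarrow> open S \<Longrightarrow> open (f -` S)"
  using continuous_on_open_vimage[of UNIV f] by auto

lemma sig_get: "S \<in> Sigma11 \<Longrightarrow> \<exists>C :: (_ \<times> nseq) set. closed C \<and> S = fst ` C"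
  unfolding Sigma11_def by auto

lemma sig_UN:
  fixes A :: "nat \<Rightarrow> 'a::topological_space set"
  assumes "\<And>i. A i \<in> Sigma11" shows "(\<Union>i. A i) \<in> Sigma11"
proof -
  obtain C :: "nat \<Rightarrow> ('a \<times> nseq) set" where C: "\<And>i. closed (C i)" "\<And>i. A i = fst ` C i"
    using sig_get[OF assms] by metis
  define D where "D = {p. (fst p, tlw (snd p)) \<in> C (snd p 0)}"
  have eqD: "- D = (\<Union>k. (\<lambda>p. snd p 0) -` {k} \<inter> (\<lambda>p. (fst p, tlw (snd p))) -` (- C k))"
    unfolding D_def by auto
  have o1: "open ((\<lambda>p::'a \<times> nseq. snd p 0) -` {k})" for k
    by (rule open_vim[OF continuous_on_product_then_coordinatewise[OF continuous_on_snd[OF continuous_on_id]] open_discrete])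
  have o2: "open ((\<lambda>p::'a \<times> nseq. (fst p, tlw (snd p))) -` (- C k))" for k
    by (intro open_vim continuous_on_Pair continuous_on_fst continuous_on_id cont_tlw' continuous_on_snd)
       (use C(1) in auto)
  have "open (- D)" unfolding eqD by (intro open_UN ballI open_Int o1 o2)
  then have "closed D" by (simp add: closed_def)
  moreover have "fst ` D = (\<Union>i. A i)"
  proof
    show "fst ` D \<subseteq> (\<Union>i. A i)" unfolding D_def C(2) by (force simp: image_iff)
    show "(\<Union>i. A i) \<subseteq> fst ` D"
    proof
      fix x assume "x \<in> (\<Union>i. A i)"
      then obtain i u where "(x, u) \<in> C i" unfolding C(2) by force
      moreover define w where "w = (\<lambda>n. case n of 0 \<Rightarrow> i | Suc m \<Rightarrow> u m)"
      ultimately have "(x, w) \<in> D" unfolding D_def tlw_def by simp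
      then show "x \<in> fst ` D" by (metis fst_conv image_eqI)
    qed
  qed
  ultimately show ?thesis unfolding Sigma11_def by blast
qed

lemma sig_INT:
  fixes A :: "nat \<Rightarrow> 'a::topological_space set"
  assumes "\<And>i. A i \<in> Sigma11" shows "(\<Inter>i. A i) \<in> Sigma11"
proof -
  obtain C :: "nat \<Rightarrow> ('a \<times> nseq) set" where C: "\<And>i. closed (C i)" "\<And>i. A i = fst ` C i"
    using sig_get[OF assms] by metis
  define D where "D = (\<Inter>i. (\<lambda>p. (fst p, compw i (snd p))) -` C i)"
  have "closed ((\<lambda>p::'a \<times> nseq. (fst p, compw i (snd p))) -` C i)" for i
    by (intro closed_vim continuous_on_Pair continuous_on_fst continuous_on_id cont_compw' continuous_on_snd C(1))
  then have "closed D" unfolding D_def by auto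
  moreover have "fst ` D = (\<Inter>i. A i)"
  proof
    show "fst ` D \<subseteq> (\<Inter>i. A i)" unfolding D_def C(2) by (force simp: image_iff)
    show "(\<Inter>i. A i) \<subseteq> fst ` D"
    proof
      fix x assume "x \<in> (\<Inter>i. A i)"
      then have "\<forall>i. \<exists>u. (x, u) \<in> C i" unfolding C(2) by force
      then obtain u where u: "\<And>i. (x, u i) \<in> C i" by metis
      define w where "w = (\<lambda>m. case prod_decode m of (i, n) \<Rightarrow> u i n)"
      have "compw i w = u i" for i unfolding compw_def w_def by simp
      then have "(x, w) \<in> D" unfolding D_def using u by simp
      then show "x \<in> fst ` D" by (metis fst_conv image_eqI)
    qed
  qed
  ultimately show ?thesis unfolding Sigma11_def by blast
qed

definition param :: "(nseq \<Rightarrow> 'w::topological_space) \<Rightarrow> bool" where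
  "param \<tau> \<longleftrightarrow> continuous_on UNIV \<tau> \<and> surj \<tau>"

lemma sig_proj:
  fixes S :: "('a::topological_space \<times> 'w::topological_space) set" and \<tau> :: "nseq \<Rightarrow> 'w"
  assumes p: "param \<tau>" and S: "S \<in> Sigma11"
  shows "fst ` S \<in> Sigma11"
proof -
  obtain C :: "(('a \<times> 'w) \<times> nseq) set" where C: "closed C" "S = fst ` C"
    using sig_get[OF S] by metis
  define D where "D = (\<lambda>p. ((fst p, \<tau> (evw (snd p))), odw (snd p))) -` C"
  have ct: "continuous_on UNIV \<tau>" using p unfolding param_def by simp
  have "continuous_on UNIV (\<lambda>p::'a \<times> nseq. ((fst p, \<tau> (evw (snd p))), odw (snd p)))"
    by (intro continuous_on_Pair continuous_on_fst continuous_on_id cont_evw' cont_odw' continuous_on_snd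
        cont_UNIV_comp[OF ct])
  then have "closed D" unfolding D_def by (rule closed_vim[OF _ C(1)])
  moreover have "fst ` D = fst ` S"
  proof
    show "fst ` D \<subseteq> fst ` S"
    proof
      fix x assume "x \<in> fst ` D"
      then obtain v where "(x, v) \<in> D" by auto
      then have "((x, \<tau> (evw v)), odw v) \<in> C" unfolding D_def by simp
      then have "(x, \<tau> (evw v)) \<in> S" unfolding C(2) by (metis fst_conv image_eqI)
      then show "x \<in> fst ` S" by (metis fst_conv image_eqI)
    qed
    show "fst ` S \<subseteq> fst ` D"
    proof
      fix x assume "x \<in> fst ` S"
      then obtain w' where "(x, w') \<in> S" by auto
      then obtain u where "((x, w'), u) \<in> C" unfolding C(2) by auto
      moreover obtain v0 where "\<tau> v0 = w'" using p unfolding param_def by (metis surjD)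
      ultimately have "(x, mergew v0 u) \<in> D" unfolding D_def by simp
      then show "x \<in> fst ` D" by (metis fst_conv image_eqI)
    qed
  qed
  ultimately show ?thesis unfolding Sigma11_def by blast
qed

lemma param_id: "param (id :: nseq \<Rightarrow> nseq)"
  unfolding param_def by auto

lemma param_prod:
  fixes \<tau>1 :: "nseq \<Rightarrow> 'a::topological_space" and \<tau>2 :: "nseq \<Rightarrow> 'b::topological_space"
  assumes "param \<tau>1" "param \<tau>2"
  shows "param (\<lambda>w. (\<tau>1 (evw w), \<tau>2 (odw w)))"
  unfolding param_def
proof
  show "continuous_on UNIV (\<lambda>w. (\<tau>1 (evw w), \<tau>2 (odw w)))"
  proof (rule continuous_on_Pair)
    show "continuous_on UNIV (\<lambda>x. \<tau>1 (evw x))"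
      using cont_UNIV_comp[of \<tau>1 evw] cont_evw assms(1) unfolding param_def by blast
    show "continuous_on UNIV (\<lambda>x. \<tau>2 (odw x))"
      using cont_UNIV_comp[of \<tau>2 odw] cont_odw assms(2) unfolding param_def by blast
  qed
  show "surj (\<lambda>w. (\<tau>1 (evw w), \<tau>2 (odw w)))"
    unfolding surj_def
  proof (rule allI)
    fix y :: "'a \<times> 'b"
    obtain a where a: "\<tau>1 a = fst y" using assms(1) unfolding param_def by (metis surjD)
    obtain b where b: "\<tau>2 b = snd y" using assms(2) unfolding param_def by (metis surjD)
    show "\<exists>x. y = (\<lambda>w. (\<tau>1 (evw w), \<tau>2 (odw w))) x" using a b by (intro exI[of _ "mergew a b"]) simp
  qed
qed

lemma param_fun:
  fixes \<tau> :: "nseq \<Rightarrow> 'b::topological_space"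
  assumes "param \<tau>"
  shows "param (\<lambda>w (i::'i::countable). \<tau> (compw (to_nat i) w))"
  unfolding param_def
proof
  show "continuous_on UNIV (\<lambda>w (i::'i::countable). \<tau> (compw (to_nat i) w))"
  proof (rule continuous_on_coordinatewise_then_product)
    fix i :: 'i
    show "continuous_on UNIV (\<lambda>x. \<tau> (compw (to_nat i) x))"
      using cont_UNIV_comp[of \<tau> "compw (to_nat i)"] cont_compw assms unfolding param_def by blast
  qed
  show "surj (\<lambda>w (i::'i::countable). \<tau> (compw (to_nat i) w))"
    unfolding surj_def
  proof (rule allI)
    fix y :: "'i \<Rightarrow> 'b"
    have "\<forall>i. \<exists>a. \<tau> a = y i" using assms unfolding param_def by (metis surjD)
    then obtain a where a: "\<And>i. \<tau> (a i) = y i" by metis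
    define w where "w = (\<lambda>m. case prod_decode m of (k, n) \<Rightarrow> a (from_nat k) n)"
    have "compw (to_nat i) w = a i" for i unfolding compw_def w_def by simp
    then show "\<exists>x. y = (\<lambda>w (i::'i::countable). \<tau> (compw (to_nat i) w)) x" using a by (intro exI[of _ w]) auto
  qed
qed

definition bitv :: "nat \<Rightarrow> real" where "bitv k = (if k = 0 then 0 else 1)"

definition sig :: "nseq \<Rightarrow> real" where
  "sig w = real_of_int (int_decode (w 0)) + (\<Sum>n. bitv (w (Suc n)) / 2 ^ Suc n)"

lemma summ_half: "summable (\<lambda>n. (1/2::real) ^ Suc n)"
  using summable_Suc_iff[of "\<lambda>n. (1/2::real)^n"] summable_geometric[of "1/2::real"] by simp

lemma cont_sig: "continuous_on UNIV sig"
proof -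
  let ?f = "\<lambda>n (w::nseq). bitv (w (Suc n)) / 2 ^ Suc n"
  have ul: "uniform_limit UNIV (\<lambda>N w. \<Sum>i<N. ?f i w) (\<lambda>w. suminf (\<lambda>i. ?f i w)) sequentially"
  proof (rule Weierstrass_m_test[OF _ summ_half])
    fix n and w :: nseq
    show "norm (?f n w) \<le> (1/2) ^ Suc n" by (simp add: bitv_def power_divide)
  qed
  have c: "continuous_on UNIV (\<lambda>w. \<Sum>i<N. ?f i w)" for N
  proof (rule continuous_on_sum)
    fix i
    show "continuous_on UNIV (?f i)"
      using cont_UNIV_comp[of "\<lambda>k. bitv k / 2 ^ Suc i" "\<lambda>w. w (Suc i)"] by simp
  qed
  have c2: "continuous_on UNIV (\<lambda>w. suminf (\<lambda>i. ?f i w))"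
    by (rule uniform_limit_theorem[OF always_eventually[OF allI[OF c]] ul]) auto
  have c1: "continuous_on UNIV (\<lambda>w::nseq. real_of_int (int_decode (w 0)))"
    using cont_UNIV_comp[of "\<lambda>k. real_of_int (int_decode k)" "\<lambda>w::nseq. w 0"] by simp
  show ?thesis unfolding sig_def by (rule continuous_on_add[OF c1 c2])
qed

lemma floor_half: "\<lfloor>(y::real)\<rfloor> = \<lfloor>2 * y\<rfloor> div 2"
proof -
  define m where "m = \<lfloor>2 * y\<rfloor>"
  have m1: "real_of_int m \<le> 2 * y" and m2: "2 * y < real_of_int m + 1" unfolding m_def by linarith+
  have "m = 2 * (m div 2) + m mod 2" by simp
  moreover have "m mod 2 \<ge> 0" "m mod 2 \<le> 1" by auto
  ultimately have a: "2 * (m div 2) \<le> m" "m + 1 \<le> 2 * (m div 2) + 2" by linarith+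
  have a1: "real_of_int (2 * (m div 2)) \<le> real_of_int m" using a(1) by (simp only: of_int_le_iff)
  have a2: "real_of_int (m + 1) \<le> real_of_int (2 * (m div 2) + 2)" using a(2) by (simp only: of_int_le_iff)
  have "real_of_int (m div 2) \<le> y" using a1 m1 by simp
  moreover have "y < real_of_int (m div 2) + 1" using a2 m2 by simp
  ultimately show ?thesis unfolding m_def[symmetric] by (simp add: floor_eq_iff)
qed

lemma binary_partial:
  fixes x :: real assumes x0: "0 \<le> x" and x1: "x < 1"
  shows "(\<Sum>n<N. real_of_int (\<lfloor>2 ^ Suc n * x\<rfloor> mod 2) / 2 ^ Suc n) = real_of_int \<lfloor>2 ^ N * x\<rfloor> / 2 ^ N"
proof (induction N)
  case 0
  then show ?case using x0 x1 by (simp add: floor_eq_iff)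
next
  case (Suc N)
  define m where "m = \<lfloor>2 ^ Suc N * x\<rfloor>"
  have "\<lfloor>2 ^ N * x\<rfloor> = m div 2" unfolding m_def using floor_half[of "2 ^ N * x"] by (simp add: mult.assoc)
  then have e: "real_of_int m = 2 * real_of_int \<lfloor>2 ^ N * x\<rfloor> + real_of_int (m mod 2)"
    by (metis (no_types, opaque_lifting) div_mult_mod_eq mult.commute of_int_add of_int_mult of_int_numeral)
  have "(\<Sum>n<Suc N. real_of_int (\<lfloor>2 ^ Suc n * x\<rfloor> mod 2) / 2 ^ Suc n)
      = real_of_int \<lfloor>2 ^ N * x\<rfloor> / 2 ^ N + real_of_int (m mod 2) / 2 ^ Suc N"
    using Suc.IH unfolding m_def by (simp only: sum.lessThan_Suc)
  also have "\<dots> = (2 * real_of_int \<lfloor>2 ^ N * x\<rfloor> + real_of_int (m mod 2)) / 2 ^ Suc N"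
    by (simp add: field_simps)
  also have "\<dots> = real_of_int m / 2 ^ Suc N" using e by simp
  finally show ?case unfolding m_def .
qed

lemma binary_sum:
  fixes x :: real assumes x0: "0 \<le> x" and x1: "x < 1"
  shows "(\<lambda>n. real_of_int (\<lfloor>2 ^ Suc n * x\<rfloor> mod 2) / 2 ^ Suc n) sums x"
  unfolding sums_def binary_partial[OF x0 x1]
proof (rule real_tendsto_sandwich[where f="\<lambda>N. x - (1/2) ^ N" and h="\<lambda>N. x"])
  show "\<forall>\<^sub>F N in sequentially. x - (1/2) ^ N \<le> real_of_int \<lfloor>2 ^ N * x\<rfloor> / 2 ^ N"
  proof (rule always_eventually, rule allI)
    fix N :: nat
    have "2 ^ N * x - 1 \<le> real_of_int \<lfloor>2 ^ N * x\<rfloor>" by linarith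
    then have "(2 ^ N * x - 1) / 2 ^ N \<le> real_of_int \<lfloor>2 ^ N * x\<rfloor> / 2 ^ N"
      by (simp add: divide_right_mono)
    moreover have "x - (1/2) ^ N = (2 ^ N * x - 1) / 2 ^ N" by (simp add: field_simps power_divide)
    ultimately show "x - (1/2) ^ N \<le> real_of_int \<lfloor>2 ^ N * x\<rfloor> / 2 ^ N" by simp
  qed
  show "\<forall>\<^sub>F N in sequentially. real_of_int \<lfloor>2 ^ N * x\<rfloor> / 2 ^ N \<le> x"
  proof (rule always_eventually, rule allI)
    fix N :: nat
    have "real_of_int \<lfloor>2 ^ N * x\<rfloor> \<le> 2 ^ N * x" by linarith
    then show "real_of_int \<lfloor>2 ^ N * x\<rfloor> / 2 ^ N \<le> x" by (simp add: field_simps)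
  qed
  show "(\<lambda>N. x - (1/2) ^ N) \<longlonglongrightarrow> x"
    using tendsto_diff[OF tendsto_const[of x] LIMSEQ_power_zero[of "1/2::real"]] by simp
  show "(\<lambda>N. x) \<longlonglongrightarrow> x" by simp
qed

lemma surj_sig: "surj sig"
  unfolding surj_def
proof (rule allI)
  fix t :: real
  define k where "k = \<lfloor>t\<rfloor>"
  define x where "x = t - real_of_int k"
  have x0: "0 \<le> x" and x1: "x < 1" unfolding x_def k_def by linarith+
  define w where "w = (\<lambda>n. case n of 0 \<Rightarrow> int_encode k | Suc n \<Rightarrow> nat (\<lfloor>2 ^ Suc n * x\<rfloor> mod 2))"
  have "bitv (w (Suc n)) / 2 ^ Suc n = real_of_int (\<lfloor>2 ^ Suc n * x\<rfloor> mod 2) / 2 ^ Suc n" for n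
  proof -
    have "\<lfloor>2 ^ Suc n * x\<rfloor> mod 2 = 0 \<or> \<lfloor>2 ^ Suc n * x\<rfloor> mod 2 = 1" by auto
    then show ?thesis unfolding w_def bitv_def by auto
  qed
  then have "(\<Sum>n. bitv (w (Suc n)) / 2 ^ Suc n) = x"
    using sums_unique[OF binary_sum[OF x0 x1]] by simp
  then have "sig w = t" unfolding sig_def w_def x_def by simp
  then show "\<exists>w. t = sig w" by metis
qed

lemma param_sig: "param sig"
  unfolding param_def using cont_sig surj_sig by simp

lemma param_nmat: "param (\<lambda>w (i::nat \<times> nat). sig (compw (to_nat i) w))"
  by (rule param_fun[OF param_sig])

lemma sig_Int: "A \<in> Sigma11 \<Longrightarrow> B \<in> Sigma11 \<Longrightarrow> A \<inter> B \<in> Sigma11"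
proof -
  assume "A \<in> Sigma11" "B \<in> Sigma11"
  then have "(\<Inter>i::nat. if i = 0 then A else B) \<in> Sigma11" by (intro sig_INT) auto
  moreover have "(\<Inter>i::nat. if i = 0 then A else B) = A \<inter> B" by (auto split: if_splits)
  ultimately show ?thesis by simp
qed

lemma sig_Un: "A \<in> Sigma11 \<Longrightarrow> B \<in> Sigma11 \<Longrightarrow> A \<union> B \<in> Sigma11"
proof -
  assume "A \<in> Sigma11" "B \<in> Sigma11"
  then have "(\<Union>i::nat. if i = 0 then A else B) \<in> Sigma11" by (intro sig_UN) auto
  moreover have "(\<Union>i::nat. if i = 0 then A else B) = A \<union> B" by (auto split: if_splits)
  ultimately show ?thesis by simp
qed

lemma sig_UNc:
  fixes A :: "'i::countable \<Rightarrow> 'a::topological_space set"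
  assumes "\<And>i. A i \<in> Sigma11" shows "(\<Union>i. A i) \<in> Sigma11"
proof -
  have "(\<Union>n. A (from_nat n)) \<in> Sigma11" using assms by (rule sig_UN)
  moreover have "(\<Union>n. A (from_nat n)) = (\<Union>i. A i)"
  proof
    show "(\<Union>i. A i) \<subseteq> (\<Union>n. A (from_nat n))"
    proof
      fix x assume "x \<in> (\<Union>i. A i)"
      then obtain i where "x \<in> A i" by blast
      then have "x \<in> A (from_nat (to_nat i))" by simp
      then show "x \<in> (\<Union>n. A (from_nat n))" by blast
    qed
  qed blast
  ultimately show ?thesis by simp
qed

definition gc :: "'a::topological_space set \<Rightarrow> bool" where
  "gc S \<longleftrightarrow> closed S \<and> - S \<in> Sigma11"

lemma gc_le:
  fixes f g :: "'a::topological_space \<Rightarrow> real"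
  assumes f: "continuous_on UNIV f" and g: "continuous_on UNIV g"
  shows "gc {x. f x \<le> g x}"
  unfolding gc_def
proof
  show "closed {x. f x \<le> g x}" by (rule closed_Collect_le[OF f g])
  have "- {x. f x \<le> g x} = (\<Union>k::nat. {x. g x + 1 / real (Suc k) \<le> f x})"
  proof
    show "- {x. f x \<le> g x} \<subseteq> (\<Union>k::nat. {x. g x + 1 / real (Suc k) \<le> f x})"
    proof
      fix x assume "x \<in> - {x. f x \<le> g x}"
      then have "0 < f x - g x" by simp
      then obtain k where "inverse (real (Suc k)) < f x - g x" using reals_Archimedean by blast
      then have "g x + 1 / real (Suc k) \<le> f x" by (simp add: inverse_eq_divide)
      then show "x \<in> (\<Union>k::nat. {x. g x + 1 / real (Suc k) \<le> f x})" by blast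
    qed
    show "(\<Union>k::nat. {x. g x + 1 / real (Suc k) \<le> f x}) \<subseteq> - {x. f x \<le> g x}"
    proof
      fix x assume "x \<in> (\<Union>k::nat. {x. g x + 1 / real (Suc k) \<le> f x})"
      then obtain k :: nat where "g x + 1 / real (Suc k) \<le> f x" by blast
      moreover have "(0::real) < 1 / real (Suc k)" by simp
      ultimately have "\<not> f x \<le> g x" by linarith
      then show "x \<in> - {x. f x \<le> g x}" by simp
    qed
  qed
  moreover have "{x. g x + 1 / real (Suc k) \<le> f x} \<in> Sigma11" for k :: nat
    by (intro sig_closed closed_Collect_le continuous_on_add g continuous_on_const f)
  ultimately show "- {x. f x \<le> g x} \<in> Sigma11" by (simp add: sig_UN)
qed

lemma gc_conj: "gc {x. P x} \<Longrightarrow> gc {x. Q x} \<Longrightarrow> gc {x. P x \<and> Q x}"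
  unfolding gc_def
proof (elim conjE, intro conjI)
  assume "closed {x. P x}" "closed {x. Q x}" "- {x. P x} \<in> Sigma11" "- {x. Q x} \<in> Sigma11"
  then show "closed {x. P x \<and> Q x}" by (intro closed_Collect_conj)
  have "- {x. P x \<and> Q x} = - {x. P x} \<union> - {x. Q x}" by auto
  then show "- {x. P x \<and> Q x} \<in> Sigma11" using sig_Un \<open>- {x. P x} \<in> Sigma11\<close> \<open>- {x. Q x} \<in> Sigma11\<close> by simp
qed

lemma gc_disj: "gc {x. P x} \<Longrightarrow> gc {x. Q x} \<Longrightarrow> gc {x. P x \<or> Q x}"
  unfolding gc_def
proof (elim conjE, intro conjI)
  assume "closed {x. P x}" "closed {x. Q x}" "- {x. P x} \<in> Sigma11" "- {x. Q x} \<in> Sigma11"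
  then show "closed {x. P x \<or> Q x}" by (intro closed_Collect_disj)
  have "- {x. P x \<or> Q x} = - {x. P x} \<inter> - {x. Q x}" by auto
  then show "- {x. P x \<or> Q x} \<in> Sigma11" using sig_Int \<open>- {x. P x} \<in> Sigma11\<close> \<open>- {x. Q x} \<in> Sigma11\<close> by simp
qed

lemma gc_all: "(\<And>i::'i::countable. gc {x. P i x}) \<Longrightarrow> gc {x. \<forall>i. P i x}"
  unfolding gc_def
proof (intro conjI)
  assume h: "\<And>i::'i::countable. closed {x. P i x} \<and> - {x. P i x} \<in> Sigma11"
  then show "closed {x. \<forall>i. P i x}" by (intro closed_Collect_all) simp
  have "- {x. \<forall>i. P i x} = (\<Union>i. - {x. P i x})" by auto
  then show "- {x. \<forall>i. P i x} \<in> Sigma11" using sig_UNc[of "\<lambda>i. - {x. P i x}"] h by simp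
qed

lemma gc_const: "gc {x::'a::topological_space. P}"
proof (cases P)
  case True
  then have "{x::'a. P} = UNIV" by simp
  then show ?thesis unfolding gc_def using sig_closed[of "{}::'a set"] by simp
next
  case False
  then have "{x::'a. P} = {}" by simp
  then show ?thesis unfolding gc_def using sig_closed[of "UNIV::'a set"] by simp
qed

lemma gc_eq_real:
  fixes f g :: "'a::topological_space \<Rightarrow> real"
  assumes f: "continuous_on UNIV f" and g: "continuous_on UNIV g"
  shows "gc {x. f x = g x}"
proof -
  have "gc {x. f x \<le> g x \<and> g x \<le> f x}" by (intro gc_conj gc_le f g)
  moreover have "{x. f x \<le> g x \<and> g x \<le> f x} = {x. f x = g x}" by auto
  ultimately show ?thesis by simp
qed

lemma gc_eq_nat:
  fixes F G :: "'a::topological_space \<Rightarrow> nat"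
  assumes F: "continuous_on UNIV F" and G: "continuous_on UNIV G"
  shows "gc {x. F x = G x}"
  unfolding gc_def
proof
  show "closed {x. F x = G x}" by (rule closed_Collect_eq[OF F G])
  have "- {x. F x = G x} = (\<Union>a::nat. F -` {a} \<inter> G -` (- {a}))" by auto
  moreover have "F -` {a} \<inter> G -` (- {a}) \<in> Sigma11" for a :: nat
  proof (rule sig_closed, rule closed_Int)
    show "closed (F -` {a})" by (rule closed_vim[OF F]) simp
    have "open {a}" by (rule open_discrete)
    then show "closed (G -` (- {a}))" by (intro closed_vim[OF G]) (simp add: closed_Compl)
  qed
  ultimately show "- {x. F x = G x} \<in> Sigma11" by (simp add: sig_UN)
qed

definition fsig :: "'a::topological_space set \<Rightarrow> bool" where
  "fsig S \<longleftrightarrow> (\<exists>C. (\<forall>j::nat. gc (C j)) \<and> S = (\<Union>j. C j))"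

definition gpi3 :: "'a::topological_space set \<Rightarrow> bool" where
  "gpi3 S \<longleftrightarrow> (\<exists>B. (\<forall>i::nat. fsig (B i)) \<and> S = (\<Inter>i. B i))"

lemma fsigE:
  assumes "fsig S"
  obtains C where "\<And>j::nat. gc (C j)" "S = (\<Union>j. C j)"
proof -
  from assms obtain C where "(\<forall>j::nat. gc (C j)) \<and> S = (\<Union>j. C j)" unfolding fsig_def ..
  then show ?thesis by (intro that[of C]) simp_all
qed

lemma gpi3E:
  assumes "gpi3 S"
  obtains B where "\<And>i::nat. fsig (B i)" "S = (\<Inter>i. B i)"
proof -
  from assms obtain B where "(\<forall>i::nat. fsig (B i)) \<and> S = (\<Inter>i. B i)" unfolding gpi3_def ..
  then show ?thesis by (intro that[of B]) simp_all
qed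

lemma fsig_choice:
  assumes "\<And>i. fsig (A i)"
  shows "\<exists>C. \<forall>i. (\<forall>j::nat. gc (C i j)) \<and> A i = (\<Union>j. C i j)"
proof (rule choice, rule allI)
  fix i show "\<exists>C. (\<forall>j::nat. gc (C j)) \<and> A i = (\<Union>j. C j)" using assms[of i] unfolding fsig_def .
qed

lemma gpi3_choice:
  assumes "\<And>i. gpi3 (A i)"
  shows "\<exists>C. \<forall>i. (\<forall>j::nat. fsig (C i j)) \<and> A i = (\<Inter>j. C i j)"
proof (rule choice, rule allI)
  fix i show "\<exists>C. (\<forall>j::nat. fsig (C j)) \<and> A i = (\<Inter>j. C j)" using assms[of i] unfolding gpi3_def .
qed

lemma fsig_closed: "gc S \<Longrightarrow> fsig S"
  unfolding fsig_def by (rule exI[of _ "\<lambda>_. S"]) auto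

lemma fsig_UN:
  fixes A :: "'i::countable \<Rightarrow> 'a::topological_space set"
  assumes "\<And>i. fsig (A i)" shows "fsig (\<Union>i. A i)"
proof -
  obtain C :: "'i \<Rightarrow> nat \<Rightarrow> 'a set" where C0: "\<forall>i. (\<forall>j. gc (C i j)) \<and> A i = (\<Union>j. C i j)"
    using fsig_choice[OF assms] ..
  then have C1: "\<And>i j. gc (C i j)" and C2: "\<And>i. A i = (\<Union>j. C i j)" by auto
  define C' where "C' = (\<lambda>m. C (from_nat (fst (prod_decode m))) (snd (prod_decode m)))"
  have "gc (C' m)" for m unfolding C'_def by (rule C1)
  moreover have "(\<Union>i. A i) = (\<Union>m. C' m)"
  proof
    show "(\<Union>i. A i) \<subseteq> (\<Union>m. C' m)"
    proof
      fix x assume "x \<in> (\<Union>i. A i)"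
      then obtain i where "x \<in> A i" by blast
      then have "x \<in> (\<Union>j. C i j)" using C2 by simp
      then obtain j where "x \<in> C i j" by blast
      then have "x \<in> C' (prod_encode (to_nat i, j))" unfolding C'_def by simp
      then show "x \<in> (\<Union>m. C' m)" by blast
    qed
    show "(\<Union>m. C' m) \<subseteq> (\<Union>i. A i)"
    proof
      fix x assume "x \<in> (\<Union>m. C' m)"
      then obtain m where "x \<in> C' m" by blast
      then have "x \<in> (\<Union>j. C (from_nat (fst (prod_decode m))) j)" unfolding C'_def by blast
      then have "x \<in> A (from_nat (fst (prod_decode m)))" using C2 by simp
      then show "x \<in> (\<Union>i. A i)" by blast
    qed
  qed
  ultimately show ?thesis unfolding fsig_def by (intro exI[of _ "C'"] conjI allI) auto
qed

lemma fsig_Int: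
  fixes A B :: "'a::topological_space set"
  assumes "fsig A" "fsig B" shows "fsig (A \<inter> B)"
proof -
  obtain CA :: "nat \<Rightarrow> 'a set" where CA: "\<And>j. gc (CA j)" "A = (\<Union>j. CA j)" using assms(1) by (rule fsigE) metis
  obtain CB :: "nat \<Rightarrow> 'a set" where CB: "\<And>j. gc (CB j)" "B = (\<Union>j. CB j)" using assms(2) by (rule fsigE) metis
  define C where "C = (\<lambda>m. case prod_decode m of (i, j) \<Rightarrow> CA i \<inter> CB j)"
  have "gc (C m)" for m
  proof -
    have "gc (CA i \<inter> CB j)" for i j
    proof -
      have "closed (CA i \<inter> CB j)" using CA(1)[of i] CB(1)[of j] unfolding gc_def by (simp add: closed_Int)
      moreover have "- (CA i \<inter> CB j) = - CA i \<union> - CB j" by auto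
      ultimately show ?thesis using CA(1)[of i] CB(1)[of j] unfolding gc_def by (simp add: sig_Un)
    qed
    then show ?thesis unfolding C_def by (simp split: prod.split)
  qed
  moreover have "A \<inter> B = (\<Union>m. C m)"
  proof
    show "A \<inter> B \<subseteq> (\<Union>m. C m)"
    proof
      fix x assume "x \<in> A \<inter> B"
      then have "x \<in> (\<Union>j. CA j)" "x \<in> (\<Union>j. CB j)" using CA(2) CB(2) by simp_all
      then obtain i j where "x \<in> CA i" "x \<in> CB j" by blast
      then have "x \<in> C (prod_encode (i, j))" unfolding C_def by simp
      then show "x \<in> (\<Union>m. C m)" by blast
    qed
    show "(\<Union>m. C m) \<subseteq> A \<inter> B"
      unfolding C_def CA(2) CB(2) by (auto split: prod.splits)
  qed
  ultimately show ?thesis unfolding fsig_def by (intro exI[of _ C] conjI allI) auto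
qed

lemma gpi3_fsig: "fsig S \<Longrightarrow> gpi3 S"
  unfolding gpi3_def by (rule exI[of _ "\<lambda>_. S"]) auto

lemma gpi3_INT:
  fixes A :: "'i::countable \<Rightarrow> 'a::topological_space set"
  assumes "\<And>i. gpi3 (A i)" shows "gpi3 (\<Inter>i. A i)"
proof -
  obtain C :: "'i \<Rightarrow> nat \<Rightarrow> 'a set" where C0: "\<forall>i. (\<forall>j. fsig (C i j)) \<and> A i = (\<Inter>j. C i j)"
    using gpi3_choice[OF assms] ..
  then have C1: "\<And>i j. fsig (C i j)" and C2: "\<And>i. A i = (\<Inter>j. C i j)" by auto
  define C' where "C' = (\<lambda>m. C (from_nat (fst (prod_decode m))) (snd (prod_decode m)))"
  have "fsig (C' m)" for m unfolding C'_def by (rule C1)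
  moreover have "(\<Inter>i. A i) = (\<Inter>m. C' m)"
  proof
    show "(\<Inter>m. C' m) \<subseteq> (\<Inter>i. A i)"
    proof
      fix x assume x: "x \<in> (\<Inter>m. C' m)"
      have "x \<in> A i" for i
      proof -
        have "x \<in> C i j" for j
        proof -
          have "x \<in> C' (prod_encode (to_nat i, j))" using x by blast
          then show ?thesis unfolding C'_def by simp
        qed
        then have "x \<in> (\<Inter>j. C i j)" by blast
        then show ?thesis using C2 by simp
      qed
      then show "x \<in> (\<Inter>i. A i)" by blast
    qed
    show "(\<Inter>i. A i) \<subseteq> (\<Inter>m. C' m)"
    proof
      fix x assume x: "x \<in> (\<Inter>i. A i)"
      have "x \<in> C' m" for m
      proof -
        have "x \<in> A (from_nat (fst (prod_decode m)))" using x by blast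
        then have "x \<in> (\<Inter>j. C (from_nat (fst (prod_decode m))) j)" using C2 by simp
        then show ?thesis unfolding C'_def by blast
      qed
      then show "x \<in> (\<Inter>m. C' m)" by blast
    qed
  qed
  ultimately show ?thesis unfolding gpi3_def by (intro exI[of _ "C'"] conjI allI) auto
qed

lemma gpi3_Int: "gpi3 A \<Longrightarrow> gpi3 B \<Longrightarrow> gpi3 (A \<inter> B)"
proof -
  assume "gpi3 A" "gpi3 B"
  then have "gpi3 (\<Inter>b::bool. if b then A else B)" by (intro gpi3_INT) auto
  moreover have "(\<Inter>b::bool. if b then A else B) = A \<inter> B" by (auto split: if_splits)
  ultimately show ?thesis by simp
qed

lemma fsig_ex: "(\<And>i::'i::countable. fsig {x. P i x}) \<Longrightarrow> fsig {x. \<exists>i. P i x}"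
proof -
  assume "\<And>i::'i::countable. fsig {x. P i x}"
  then have "fsig (\<Union>i. {x. P i x})" by (rule fsig_UN)
  moreover have "(\<Union>i. {x. P i x}) = {x. \<exists>i. P i x}" by auto
  ultimately show ?thesis by simp
qed

lemma gpi3_all: "(\<And>i::'i::countable. gpi3 {x. P i x}) \<Longrightarrow> gpi3 {x. \<forall>i. P i x}"
proof -
  assume "\<And>i::'i::countable. gpi3 {x. P i x}"
  then have "gpi3 (\<Inter>i. {x. P i x})" by (rule gpi3_INT)
  moreover have "(\<Inter>i. {x. P i x}) = {x. \<forall>i. P i x}" by auto
  ultimately show ?thesis by simp
qed

lemma gpi3_conj: "gpi3 {x. P x} \<Longrightarrow> gpi3 {x. Q x} \<Longrightarrow> gpi3 {x. P x \<and> Q x}"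
  using gpi3_Int[of "{x. P x}" "{x. Q x}"] by (simp add: Collect_conj_eq)

lemma gpi3_closed: "gc S \<Longrightarrow> gpi3 S" by (simp add: fsig_closed gpi3_fsig)

lemma gpi3_Borel: "gpi3 (S::'a::topological_space set) \<Longrightarrow> S \<in> Borel_Pi 3"
proof -
  assume "gpi3 S"
  then obtain B :: "nat \<Rightarrow> 'a set" where B: "\<And>i. fsig (B i)" "S = (\<Inter>i. B i)" by (rule gpi3E) metis
  have "- (- B i) \<in> Borel_Sigma 2" for i
  proof -
    obtain C :: "nat \<Rightarrow> 'a set" where C: "\<And>j. gc (C j)" "B i = (\<Union>j. C j)" using B(1)[of i] by (rule fsigE) metis
    have "- C j \<in> Borel_Sigma 1" for j using C(1)[of j] by (simp add: closed_def gc_def)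
    then show ?thesis using C(2) by (auto simp: numeral_2_eq_2)
  qed
  then have h: "\<forall>i. - (- B i) \<in> Borel_Sigma (Suc (Suc 0))" by (simp add: numeral_2_eq_2)
  have "(\<Union>i. - B i) \<in> Borel_Sigma (Suc (Suc (Suc 0)))"
    by (subst Borel_Sigma.simps(3)) (use h in blast)
  then have "(\<Union>i. - B i) \<in> Borel_Sigma 3" by (simp add: numeral_3_eq_3)
  moreover have "- S = (\<Union>i. - B i)" using B(2) by auto
  ultimately show ?thesis unfolding Borel_Pi_def by simp
qed

lemma fsig_sig: "fsig (S::'a::topological_space set) \<Longrightarrow> S \<in> Sigma11"
proof -
  assume "fsig S"
  then obtain C :: "nat \<Rightarrow> 'a set" where C: "\<And>j. gc (C j)" "S = (\<Union>j. C j)" by (rule fsigE) metis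
  have "C j \<in> Sigma11" for j using C(1)[of j] unfolding gc_def by (simp add: sig_closed)
  then show ?thesis unfolding C(2) by (rule sig_UN)
qed

lemma fsig_compl_sig:
  fixes S :: "'a::topological_space set"
  assumes "fsig S" shows "- S \<in> Sigma11"
proof -
  obtain C :: "nat \<Rightarrow> 'a set" where C: "\<And>j. gc (C j)" "S = (\<Union>j. C j)" using assms by (rule fsigE) metis
  have "- S = (\<Inter>j. - C j)" using C(2) by auto
  moreover have "- C j \<in> Sigma11" for j using C(1)[of j] unfolding gc_def by simp
  ultimately show ?thesis by (simp add: sig_INT)
qed

lemma gpi3_sig: "gpi3 (S::'a::topological_space set) \<Longrightarrow> S \<in> Sigma11"
proof -
  assume "gpi3 S"
  then obtain B :: "nat \<Rightarrow> 'a set" where B: "\<And>i. fsig (B i)" "S = (\<Inter>i. B i)" by (rule gpi3E) metis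
  show ?thesis unfolding B(2) by (rule sig_INT[OF fsig_sig[OF B(1)]])
qed

lemma gpi3_compl_sig:
  fixes S :: "'a::topological_space set"
  assumes "gpi3 S" shows "- S \<in> Sigma11"
proof -
  obtain B :: "nat \<Rightarrow> 'a set" where B: "\<And>i. fsig (B i)" "S = (\<Inter>i. B i)" using assms by (rule gpi3E) metis
  have "- S = (\<Union>i. - B i)" using B(2) by auto
  then show ?thesis using B(1) by (simp add: sig_UN fsig_compl_sig)
qed

lemma metric_alt: "metric_on_nat d \<longleftrightarrow>
  (\<forall>a b. 0 \<le> d (a, b)) \<and> (\<forall>a. d (a, a) = 0) \<and> (\<forall>a b. a \<noteq> b \<longrightarrow> d (a, b) \<noteq> 0) \<and>
  (\<forall>a b. d (a, b) = d (b, a)) \<and> (\<forall>a b c. d (a, c) \<le> d (a, b) + d (b, c))"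
proof -
  have "(\<forall>x y. d (x, y) = (0::real) \<longleftrightarrow> x = y) \<longleftrightarrow> (\<forall>a. d (a, a) = 0) \<and> (\<forall>a b. a \<noteq> b \<longrightarrow> d (a, b) \<noteq> 0)"
  proof
    assume h: "\<forall>x y. d (x, y) = (0::real) \<longleftrightarrow> x = y"
    show "(\<forall>a. d (a, a) = 0) \<and> (\<forall>a b. a \<noteq> b \<longrightarrow> d (a, b) \<noteq> 0)"
    proof (intro conjI allI impI)
      fix a :: nat show "d (a, a) = 0" using h by simp
    next
      fix a b :: nat assume "a \<noteq> b" then show "d (a, b) \<noteq> 0" using h by simp
    qed
  next
    assume h: "(\<forall>a. d (a, a) = 0) \<and> (\<forall>a b. a \<noteq> b \<longrightarrow> d (a, b) \<noteq> 0)"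
    show "\<forall>x y. d (x, y) = (0::real) \<longleftrightarrow> x = y"
    proof (intro allI)
      fix x y :: nat show "d (x, y) = (0::real) \<longleftrightarrow> x = y"
        using h by (cases "x = y") simp_all
    qed
  qed
  then show ?thesis unfolding metric_on_nat_def by (simp only: conj_assoc)
qed

lemma cont_coord: "continuous_on UNIV D \<Longrightarrow> continuous_on UNIV (\<lambda>x. D x i)"
  by (rule continuous_on_product_then_coordinatewise)

lemma gpi3_metric:
  fixes D :: "'a::topological_space \<Rightarrow> nmat"
  assumes cD: "continuous_on UNIV D"
  shows "gpi3 {x. metric_on_nat (D x)}"
proof -
  have c: "continuous_on UNIV (\<lambda>x. D x (a, b))" for a b using cont_coord[OF cD] .
  have g1: "gpi3 {x. \<forall>a b. 0 \<le> D x (a, b)}"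
    by (intro gpi3_all gpi3_closed gc_le[OF continuous_on_const c])
  have g2: "gpi3 {x. \<forall>a. D x (a, a) = 0}"
    by (intro gpi3_all gpi3_closed gc_eq_real[OF c continuous_on_const])
  have g3: "gpi3 {x. \<forall>a b. a \<noteq> b \<longrightarrow> D x (a, b) \<noteq> 0}"
  proof (intro gpi3_all gpi3_fsig)
    fix a b :: nat
    have e: "{x. a \<noteq> b \<longrightarrow> D x (a, b) \<noteq> 0} = {x. \<exists>k::nat. a = b \<or> 1 / real (Suc k) \<le> \<bar>D x (a, b)\<bar>}"
    proof (rule set_eqI)
      fix x
      show "x \<in> {x. a \<noteq> b \<longrightarrow> D x (a, b) \<noteq> 0} \<longleftrightarrow> x \<in> {x. \<exists>k::nat. a = b \<or> 1 / real (Suc k) \<le> \<bar>D x (a, b)\<bar>}"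
      proof (cases "a = b")
        case True then show ?thesis by simp
      next
        case False
        have "D x (a, b) \<noteq> 0 \<longleftrightarrow> (\<exists>k::nat. 1 / real (Suc k) \<le> \<bar>D x (a, b)\<bar>)"
        proof
          assume "D x (a, b) \<noteq> 0"
          then have "0 < \<bar>D x (a, b)\<bar>" by simp
          then obtain k where "inverse (real (Suc k)) < \<bar>D x (a, b)\<bar>" using reals_Archimedean by blast
          then show "\<exists>k::nat. 1 / real (Suc k) \<le> \<bar>D x (a, b)\<bar>" by (auto simp: inverse_eq_divide intro: less_imp_le)
        next
          assume "\<exists>k::nat. 1 / real (Suc k) \<le> \<bar>D x (a, b)\<bar>"
          then obtain k :: nat where "1 / real (Suc k) \<le> \<bar>D x (a, b)\<bar>" by blast
          moreover have "(0::real) < 1 / real (Suc k)" by simp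
          ultimately show "D x (a, b) \<noteq> 0" by auto
        qed
        then show ?thesis using False by simp
      qed
    qed
    have cab: "continuous_on UNIV (\<lambda>x. \<bar>D x (a, b)\<bar>)" by (rule continuous_on_rabs[OF c])
    have "fsig {x. \<exists>k::nat. a = b \<or> 1 / real (Suc k) \<le> \<bar>D x (a, b)\<bar>}"
      by (intro fsig_ex fsig_closed gc_disj gc_const gc_le[OF continuous_on_const cab])
    then show "fsig {x. a \<noteq> b \<longrightarrow> D x (a, b) \<noteq> 0}" unfolding e .
  qed
  have g4: "gpi3 {x. \<forall>a b. D x (a, b) = D x (b, a)}"
    by (intro gpi3_all gpi3_closed gc_eq_real[OF c c])
  have g5: "gpi3 {x. \<forall>a b c. D x (a, c) \<le> D x (a, b) + D x (b, c)}"
    by (intro gpi3_all gpi3_closed gc_le[OF c continuous_on_add[OF c c]])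
  show ?thesis unfolding metric_alt by (intro gpi3_conj g1 g2 g3 g4 g5)
qed

lemma inv_Suc_lt: "(0::real) < e \<Longrightarrow> \<exists>k. 1 / real (Suc k) < e"
  using reals_Archimedean by (simp add: inverse_eq_divide)

lemma cauchy_alt: "cauchy_in d z \<longleftrightarrow> (\<forall>k. \<exists>N. \<forall>m n. d (z (m + N), z (n + N)) \<le> 1 / real (Suc k))"
proof
  assume c: "cauchy_in d z"
  show "\<forall>k. \<exists>N. \<forall>m n. d (z (m + N), z (n + N)) \<le> 1 / real (Suc k)"
  proof
    fix k
    obtain N where "\<forall>m\<ge>N. \<forall>n\<ge>N. d (z m, z n) < 1 / real (Suc k)"
      using c unfolding cauchy_in_def by (meson divide_pos_pos of_nat_0_less_iff zero_less_Suc zero_less_one)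
    then show "\<exists>N. \<forall>m n. d (z (m + N), z (n + N)) \<le> 1 / real (Suc k)"
      by (intro exI[of _ N]) (auto intro: less_imp_le)
  qed
next
  assume c: "\<forall>k. \<exists>N. \<forall>m n. d (z (m + N), z (n + N)) \<le> 1 / real (Suc k)"
  show "cauchy_in d z" unfolding cauchy_in_def
  proof (intro allI impI)
    fix e :: real assume "0 < e"
    then obtain k where k: "1 / real (Suc k) < e" using inv_Suc_lt by blast
    obtain N where N: "\<forall>m n. d (z (m + N), z (n + N)) \<le> 1 / real (Suc k)" using c by blast
    show "\<exists>N. \<forall>m\<ge>N. \<forall>n\<ge>N. d (z m, z n) < e"
    proof (intro exI[of _ N] allI impI)
      fix m n assume "N \<le> m" "N \<le> n"
      then have "d (z (m - N + N), z (n - N + N)) \<le> 1 / real (Suc k)" using N by blast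
      then show "d (z m, z n) < e" using k \<open>N \<le> m\<close> \<open>N \<le> n\<close> by simp
    qed
  qed
qed

lemma gpi3_cauchy:
  fixes D :: "'a::topological_space \<Rightarrow> nmat" and Z :: "'a \<Rightarrow> nseq"
  assumes cD: "continuous_on UNIV D" and cZ: "continuous_on UNIV Z"
  shows "gpi3 {x. cauchy_in (D x) (Z x)}"
proof -
  have c: "continuous_on UNIV (\<lambda>x. D x (Z x i, Z x j))" for i j
    by (rule cont_app2[OF cD cont_coord[OF cZ] cont_coord[OF cZ]])
  show ?thesis unfolding cauchy_alt
    by (intro gpi3_all gpi3_fsig fsig_ex fsig_closed gc_all gc_le[OF c continuous_on_const])
qed

lemma continuous_alt: "continuous_wrt d d' g \<longleftrightarrow>
  (\<forall>a k. \<exists>j. \<forall>b. d (a, b) < 1 / real (Suc j) \<longrightarrow> d' (g a, g b) \<le> 1 / real (Suc k))"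
proof
  assume c: "continuous_wrt d d' g"
  show "\<forall>a k. \<exists>j. \<forall>b. d (a, b) < 1 / real (Suc j) \<longrightarrow> d' (g a, g b) \<le> 1 / real (Suc k)"
  proof (intro allI)
    fix a k
    obtain \<delta> where \<delta>: "\<delta> > 0" "\<forall>b. d (a, b) < \<delta> \<longrightarrow> d' (g a, g b) < 1 / real (Suc k)"
      using c unfolding continuous_wrt_def by (meson divide_pos_pos of_nat_0_less_iff zero_less_Suc zero_less_one)
    obtain j where j: "1 / real (Suc j) < \<delta>" using inv_Suc_lt[OF \<delta>(1)] by blast
    show "\<exists>j. \<forall>b. d (a, b) < 1 / real (Suc j) \<longrightarrow> d' (g a, g b) \<le> 1 / real (Suc k)"
      using \<delta>(2) j by (intro exI[of _ j]) (auto intro: less_imp_le)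
  qed
next
  assume c: "\<forall>a k. \<exists>j. \<forall>b. d (a, b) < 1 / real (Suc j) \<longrightarrow> d' (g a, g b) \<le> 1 / real (Suc k)"
  show "continuous_wrt d d' g" unfolding continuous_wrt_def
  proof (intro allI impI)
    fix a and e :: real assume "0 < e"
    then obtain k where k: "1 / real (Suc k) < e" using inv_Suc_lt by blast
    obtain j where j: "\<forall>b. d (a, b) < 1 / real (Suc j) \<longrightarrow> d' (g a, g b) \<le> 1 / real (Suc k)" using c by blast
    show "\<exists>\<delta>>0. \<forall>b. d (a, b) < \<delta> \<longrightarrow> d' (g a, g b) < e"
      using j k by (intro exI[of _ "1 / real (Suc j)"]) force
  qed
qed

lemma gpi3_continuous:
  fixes D D' :: "'a::topological_space \<Rightarrow> nmat" and G :: "'a \<Rightarrow> nseq"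
  assumes cD: "continuous_on UNIV D" and cD': "continuous_on UNIV D'" and cG: "continuous_on UNIV G"
  shows "gpi3 {x. continuous_wrt (D x) (D' x) (G x)}"
proof -
  have c: "continuous_on UNIV (\<lambda>x. D' x (G x i, G x j))" for i j
    by (rule cont_app2[OF cD' cont_coord[OF cG] cont_coord[OF cG]])
  have c2: "continuous_on UNIV (\<lambda>x. D x (a, b))" for a b using cont_coord[OF cD] .
  have e: "{x. continuous_wrt (D x) (D' x) (G x)} = {x. \<forall>a k. \<exists>j. \<forall>b. 1 / real (Suc j) \<le> D x (a, b) \<or>
      D' x (G x a, G x b) \<le> 1 / real (Suc k)}"
    unfolding continuous_alt by (simp only: imp_conv_disj not_less)
  show ?thesis unfolding e
    by (intro gpi3_all gpi3_fsig fsig_ex fsig_closed gc_all gc_disj gc_le[OF continuous_on_const c2]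
        gc_le[OF c continuous_on_const])
qed

lemma dense_alt: "dense_isometry d0 d1 \<iota> \<longleftrightarrow>
  (\<forall>a b. d1 (\<iota> a, \<iota> b) = d0 (a, b)) \<and> (\<forall>y k. \<exists>a. d1 (\<iota> a, y) \<le> 1 / real (Suc k))"
proof -
  have "(\<forall>y. \<forall>e>0. \<exists>a. d1 (\<iota> a, y) < e) \<longleftrightarrow> (\<forall>y k. \<exists>a. d1 (\<iota> a, y) \<le> 1 / real (Suc k))"
  proof
    assume h: "\<forall>y. \<forall>e>0. \<exists>a. d1 (\<iota> a, y) < e"
    show "\<forall>y k. \<exists>a. d1 (\<iota> a, y) \<le> 1 / real (Suc k)"
    proof (intro allI)
      fix y k
      obtain a where "d1 (\<iota> a, y) < 1 / real (Suc k)"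
        using h by (meson divide_pos_pos of_nat_0_less_iff zero_less_Suc zero_less_one)
      then show "\<exists>a. d1 (\<iota> a, y) \<le> 1 / real (Suc k)" by (auto intro: less_imp_le)
    qed
  next
    assume h: "\<forall>y k. \<exists>a. d1 (\<iota> a, y) \<le> 1 / real (Suc k)"
    show "\<forall>y. \<forall>e>0. \<exists>a. d1 (\<iota> a, y) < e"
    proof (intro allI impI)
      fix y and e :: real assume "0 < e"
      then obtain k where k: "1 / real (Suc k) < e" using inv_Suc_lt by blast
      then show "\<exists>a. d1 (\<iota> a, y) < e" using h by (meson le_less_trans)
    qed
  qed
  then show ?thesis unfolding dense_isometry_def by blast
qed

lemma gpi3_dense:
  fixes D0 D1 :: "'a::topological_space \<Rightarrow> nmat" and I :: "'a \<Rightarrow> nseq"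
  assumes cD0: "continuous_on UNIV D0" and cD1: "continuous_on UNIV D1" and cI: "continuous_on UNIV I"
  shows "gpi3 {x. dense_isometry (D0 x) (D1 x) (I x)}"
proof -
  have c: "continuous_on UNIV (\<lambda>x. D1 x (I x i, I x j))" for i j
    by (rule cont_app2[OF cD1 cont_coord[OF cI] cont_coord[OF cI]])
  have c1: "continuous_on UNIV (\<lambda>x. D1 x (I x i, y))" for i y
    by (rule cont_app2[OF cD1 cont_coord[OF cI] continuous_on_const])
  have c2: "continuous_on UNIV (\<lambda>x. D0 x (a, b))" for a b using cont_coord[OF cD0] .
  have g1: "gpi3 {x. \<forall>a b. D1 x (I x a, I x b) = D0 x (a, b)}"
    by (intro gpi3_all gpi3_closed gc_eq_real[OF c c2])
  have g2: "gpi3 {x. \<forall>y k. \<exists>a. D1 x (I x a, y) \<le> 1 / real (Suc k)}"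
    by (intro gpi3_all gpi3_fsig fsig_ex fsig_closed gc_le[OF c1 continuous_on_const])
  show ?thesis unfolding dense_alt by (rule gpi3_conj[OF g1 g2])
qed

lemma gc_commute:
  fixes I I' G0 G1 :: "'a::topological_space \<Rightarrow> nseq"
  assumes "continuous_on UNIV I" "continuous_on UNIV I'" "continuous_on UNIV G0" "continuous_on UNIV G1"
  shows "gc {x. I' x \<circ> G0 x = G1 x \<circ> I x}"
proof -
  have "{x. I' x \<circ> G0 x = G1 x \<circ> I x} = {x. \<forall>a. I' x (G0 x a) = G1 x (I x a)}"
    by (auto simp: fun_eq_iff)
  moreover have "gc {x. \<forall>a. I' x (G0 x a) = G1 x (I x a)}"
  proof (rule gc_all)
    fix a
    have c1: "continuous_on UNIV (\<lambda>x. I' x (G0 x a))" by (rule cont_app[OF assms(2) cont_coord[OF assms(3)]])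
    have c2: "continuous_on UNIV (\<lambda>x. G1 x (I x a))" by (rule cont_app[OF assms(4) cont_coord[OF assms(1)]])
    show "gc {x. I' x (G0 x a) = G1 x (I x a)}" by (rule gc_eq_nat[OF c1 c2])
  qed
  ultimately show ?thesis by simp
qed

definition approxA' :: "nseq \<Rightarrow> nmat \<Rightarrow> nmat \<Rightarrow> nseq \<Rightarrow> bool" where
  "approxA' g d d' \<iota> \<longleftrightarrow> (\<forall>y k. \<exists>a. d (\<iota> a, y) \<le> 1 / real (Suc k) \<and> d' (g (\<iota> a), g y) \<le> 1 / real (Suc k))"

lemma gpi3_approxA:
  fixes D D' :: "'a::topological_space \<Rightarrow> nmat" and G I :: "'a \<Rightarrow> nseq"
  assumes cD: "continuous_on UNIV D" and cD': "continuous_on UNIV D'" and cG: "continuous_on UNIV G"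
    and cI: "continuous_on UNIV I"
  shows "gpi3 {x. approxA' (G x) (D x) (D' x) (I x)}"
proof -
  have c1: "continuous_on UNIV (\<lambda>x. D x (I x i, y))" for i y
    by (rule cont_app2[OF cD cont_coord[OF cI] continuous_on_const])
  have cGI: "continuous_on UNIV (\<lambda>x. G x (I x i))" for i
    by (rule cont_app[OF cG cont_coord[OF cI]])
  have c2: "continuous_on UNIV (\<lambda>x. D' x (G x (I x i), G x y))" for i y
    by (rule cont_app2[OF cD' cGI cont_coord[OF cG]])
  show ?thesis unfolding approxA'_def
    by (intro gpi3_all gpi3_fsig fsig_ex fsig_closed gc_conj
        gc_le[OF c1 continuous_on_const] gc_le[OF c2 continuous_on_const])
qed

lemma inv_Suc_lt': "(0::real) < e \<Longrightarrow> \<exists>k. 1 / real (Suc k) < e"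
  using reals_Archimedean by (simp add: inverse_eq_divide)

lemma cc_cont:
  assumes md: "metric_on_nat d" and md': "metric_on_nat d'" and cc: "cauchy_continuous_wrt d d' g"
    and e: "e > 0"
  shows "\<exists>\<delta>>0. \<forall>z. d (y, z) < \<delta> \<longrightarrow> d' (g y, g z) < e"
proof (rule ccontr)
  assume H: "\<not> ?thesis"
  have "\<forall>n. \<exists>z. d (y, z) < 1 / real (Suc n) \<and> e \<le> d' (g y, g z)"
  proof
    fix n
    have "(1::real) / real (Suc n) > 0" by simp
    then show "\<exists>z. d (y, z) < 1 / real (Suc n) \<and> e \<le> d' (g y, g z)" using H by (meson not_less)
  qed
  then obtain z where z: "\<And>n. d (y, z n) < 1 / real (Suc n)" "\<And>n. e \<le> d' (g y, g (z n))" by metis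
  define s where "s = (\<lambda>n. if even n then y else z (n div 2))"
  have sy: "d (y, s m) < \<epsilon>" if "1 / real (Suc k) \<le> \<epsilon>" "2 * k \<le> m" "\<epsilon> > 0" for m k \<epsilon>
  proof (cases "even m")
    case True
    have "d (y, y) = 0" using md unfolding metric_on_nat_def by simp
    then show ?thesis using True that unfolding s_def by simp
  next
    case False
    have "k \<le> m div 2" using that(2) by simp
    then have "1 / real (Suc (m div 2)) \<le> 1 / real (Suc k)" by (simp add: frac_le)
    then show ?thesis using z(1)[of "m div 2"] that False unfolding s_def by simp
  qed
  have "cauchy_in d s" unfolding cauchy_in_def
  proof (intro allI impI)
    fix \<epsilon> :: real assume "0 < \<epsilon>"
    then obtain k where k: "1 / real (Suc k) < \<epsilon> / 2" using inv_Suc_lt'[of "\<epsilon>/2"] by auto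
    show "\<exists>N. \<forall>m\<ge>N. \<forall>n\<ge>N. d (s m, s n) < \<epsilon>"
    proof (intro exI[of _ "2 * k"] allI impI)
      fix m n assume "2 * k \<le> m" "2 * k \<le> n"
      then have "d (y, s m) < \<epsilon> / 2" "d (y, s n) < \<epsilon> / 2"
        using sy[of k "\<epsilon>/2"] k \<open>0 < \<epsilon>\<close> by auto
      moreover have "d (s m, s n) \<le> d (s m, y) + d (y, s n)" and "d (s m, y) = d (y, s m)"
        using md unfolding metric_on_nat_def by blast+
      ultimately show "d (s m, s n) < \<epsilon>" by linarith
    qed
  qed
  then have "cauchy_in d' (g \<circ> s)" using cc unfolding cauchy_continuous_wrt_def by blast
  then obtain N where N: "\<forall>m\<ge>N. \<forall>n\<ge>N. d' (g (s m), g (s n)) < e" using e unfolding cauchy_in_def by force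
  have "d' (g (s (2 * N)), g (s (Suc (2 * N)))) < e" using N by simp
  moreover have "s (2 * N) = y" "s (Suc (2 * N)) = z N" unfolding s_def by auto
  ultimately show False using z(2)[of N] by simp
qed

lemma cc_approxA:
  assumes md: "metric_on_nat d" and md': "metric_on_nat d'" and cc: "cauchy_continuous_wrt d d' g"
    and di: "dense_isometry d0 d \<iota>"
  shows "approxA' g d d' \<iota>"
  unfolding approxA'_def
proof (intro allI)
  fix y k
  define e where "e = 1 / real (Suc k)"
  have e0: "e > 0" unfolding e_def by simp
  obtain \<delta> where \<delta>: "\<delta> > 0" "\<forall>z. d (y, z) < \<delta> \<longrightarrow> d' (g y, g z) < e"
    using cc_cont[OF md md' cc e0] by blast
  obtain a where a: "d (\<iota> a, y) < min \<delta> e"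
    using di unfolding dense_isometry_def using \<delta>(1) e0 by (meson min_less_iff_conj)
  have "d (y, \<iota> a) = d (\<iota> a, y)" using md unfolding metric_on_nat_def by blast
  then have "d' (g y, g (\<iota> a)) < e" using \<delta>(2) a by simp
  moreover have "d' (g (\<iota> a), g y) = d' (g y, g (\<iota> a))" using md' unfolding metric_on_nat_def by blast
  ultimately show "\<exists>a. d (\<iota> a, y) \<le> 1 / real (Suc k) \<and> d' (g (\<iota> a), g y) \<le> 1 / real (Suc k)"
    using a unfolding e_def by (intro exI[of _ a]) auto
qed

lemma cauchy_close:
  assumes md: "metric_on_nat d" and u: "cauchy_in d u" and uv: "\<And>n. d (u n, v n) \<le> 1 / real (Suc n)"
  shows "cauchy_in d v"
  unfolding cauchy_in_def
proof (intro allI impI)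
  fix e :: real assume "0 < e"
  then obtain K where K: "1 / real (Suc K) < e / 3" using inv_Suc_lt'[of "e/3"] by auto
  have e3: "e / 3 > 0" using \<open>0 < e\<close> by simp
  obtain N1 where N1: "\<forall>m\<ge>N1. \<forall>n\<ge>N1. d (u m, u n) < e / 3" using u e3 unfolding cauchy_in_def by blast
  show "\<exists>N. \<forall>m\<ge>N. \<forall>n\<ge>N. d (v m, v n) < e"
  proof (intro exI[of _ "max K N1"] allI impI)
    fix m n assume mn: "max K N1 \<le> m" "max K N1 \<le> n"
    have small: "d (u i, v i) < e / 3" if "K \<le> i" for i
    proof -
      have "1 / real (Suc i) \<le> 1 / real (Suc K)" using that by (simp add: frac_le)
      then show ?thesis using uv[of i] K by linarith
    qed
    have "d (v m, v n) \<le> d (v m, u m) + d (u m, v n)" using md unfolding metric_on_nat_def by blast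
    moreover have "d (u m, v n) \<le> d (u m, u n) + d (u n, v n)" using md unfolding metric_on_nat_def by blast
    moreover have "d (v m, u m) = d (u m, v m)" using md unfolding metric_on_nat_def by blast
    moreover have "d (u m, u n) < e / 3" using N1 mn by auto
    moreover have "d (u m, v m) < e / 3" "d (u n, v n) < e / 3" using small mn by auto
    ultimately show "d (v m, v n) < e" by linarith
  qed
qed

lemma iso_cauchy:
  assumes "\<forall>a b. d1 (\<iota> a, \<iota> b) = d0 (a, b)"
  shows "cauchy_in d1 (\<iota> \<circ> z) \<longleftrightarrow> cauchy_in d0 z"
  using assms unfolding cauchy_in_def by simp

lemma approxA_cc:
  assumes md: "metric_on_nat d" and md': "metric_on_nat d'" and C0: "cauchy_continuous_wrt d0 d0' g0"
    and i1: "\<forall>a b. d (\<iota> a, \<iota> b) = d0 (a, b)" and i2: "\<forall>a b. d' (\<iota>' a, \<iota>' b) = d0' (a, b)"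
    and cm: "\<iota>' \<circ> g0 = g \<circ> \<iota>" and A: "approxA' g d d' \<iota>"
  shows "cauchy_continuous_wrt d d' g"
  unfolding cauchy_continuous_wrt_def
proof (intro allI impI)
  fix z assume z: "cauchy_in d z"
  have "\<forall>n. \<exists>a. d (\<iota> a, z n) \<le> 1 / real (Suc n) \<and> d' (g (\<iota> a), g (z n)) \<le> 1 / real (Suc n)"
    using A unfolding approxA'_def by blast
  then obtain a where a: "\<And>n. d (\<iota> (a n), z n) \<le> 1 / real (Suc n)"
    "\<And>n. d' (g (\<iota> (a n)), g (z n)) \<le> 1 / real (Suc n)" by metis
  have "d (z n, (\<iota> \<circ> a) n) \<le> 1 / real (Suc n)" for n
    using a(1)[of n] md unfolding metric_on_nat_def by (metis comp_apply)
  then have "cauchy_in d (\<iota> \<circ> a)" by (rule cauchy_close[OF md z])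
  then have "cauchy_in d0 a" using iso_cauchy[OF i1] by simp
  then have "cauchy_in d0' (g0 \<circ> a)" using C0 unfolding cauchy_continuous_wrt_def by blast
  then have "cauchy_in d' (\<iota>' \<circ> (g0 \<circ> a))" using iso_cauchy[OF i2] by simp
  moreover have "\<iota>' \<circ> (g0 \<circ> a) = g \<circ> \<iota> \<circ> a"
  proof -
    have cmx: "\<And>x. \<iota>' (g0 x) = g (\<iota> x)" using cm by (metis comp_apply)
    show ?thesis by (simp add: fun_eq_iff cmx)
  qed
  ultimately have c: "cauchy_in d' (g \<circ> \<iota> \<circ> a)" by simp
  have "d' ((g \<circ> \<iota> \<circ> a) n, (g \<circ> z) n) \<le> 1 / real (Suc n)" for n using a(2)[of n] by simp
  then show "cauchy_in d' (g \<circ> z)" by (rule cauchy_close[OF md' c])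
qed

lemma mem_fst_image: "x \<in> fst ` E \<longleftrightarrow> (\<exists>w. (x, w) \<in> E)"
  by force

lemma cont_fst_id: "continuous_on UNIV (fst :: 'a::topological_space \<times> 'b::topological_space \<Rightarrow> 'a)"
  using continuous_on_fst[OF continuous_on_id] by (simp add: fst_def)

lemma partA: "(({(z, d). metric_on_nat d \<and> cauchy_in d z} :: (nseq \<times> nmat) set) \<in> Borel_Pi 3)"
proof -
  have "{(z, d). metric_on_nat d \<and> cauchy_in d z} = {x::nseq \<times> nmat. metric_on_nat (snd x) \<and> cauchy_in (snd x) (fst x)}"
    by auto
  moreover have "gpi3 {x::nseq \<times> nmat. metric_on_nat (snd x) \<and> cauchy_in (snd x) (fst x)}"
  proof (rule gpi3_conj)
    have cs: "continuous_on UNIV (\<lambda>x::nseq \<times> nmat. snd x)" by (rule continuous_on_snd[OF continuous_on_id])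
    have cf: "continuous_on UNIV (\<lambda>x::nseq \<times> nmat. fst x)" by (rule continuous_on_fst[OF continuous_on_id])
    show "gpi3 {x::nseq \<times> nmat. metric_on_nat (snd x)}" by (rule gpi3_metric[OF cs])
    show "gpi3 {x::nseq \<times> nmat. cauchy_in (snd x) (fst x)}" by (rule gpi3_cauchy[OF cs cf])
  qed
  ultimately show ?thesis by (simp add: gpi3_Borel)
qed

lemma partB: "(({(g, d, d'). metric_on_nat d \<and> metric_on_nat d' \<and> continuous_wrt d d' g}
            :: (nseq \<times> nmat \<times> nmat) set) \<in> Borel_Pi 3)"
proof -
  have "{(g, d, d'). metric_on_nat d \<and> metric_on_nat d' \<and> continuous_wrt d d' g} =
    {x::nseq \<times> nmat \<times> nmat. metric_on_nat (fst (snd x)) \<and> metric_on_nat (snd (snd x)) \<and>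
       continuous_wrt (fst (snd x)) (snd (snd x)) (fst x)}"
    by auto
  moreover have "gpi3 {x::nseq \<times> nmat \<times> nmat. metric_on_nat (fst (snd x)) \<and> metric_on_nat (snd (snd x)) \<and>
       continuous_wrt (fst (snd x)) (snd (snd x)) (fst x)}"
  proof -
    have c1: "continuous_on UNIV (\<lambda>x::nseq \<times> nmat \<times> nmat. fst (snd x))"
      by (rule continuous_on_fst[OF continuous_on_snd[OF continuous_on_id]])
    have c2: "continuous_on UNIV (\<lambda>x::nseq \<times> nmat \<times> nmat. snd (snd x))"
      by (rule continuous_on_snd[OF continuous_on_snd[OF continuous_on_id]])
    have c3: "continuous_on UNIV (\<lambda>x::nseq \<times> nmat \<times> nmat. fst x)"
      by (rule continuous_on_fst[OF continuous_on_id])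
    show ?thesis
      by (rule gpi3_conj[OF gpi3_metric[OF c1] gpi3_conj[OF gpi3_metric[OF c2] gpi3_continuous[OF c1 c2 c3]]])
  qed
  ultimately show ?thesis by (simp add: gpi3_Borel)
qed

lemma partC_sig: "- C_omega \<in> Sigma11"
proof -
  define E where "E = {p :: (nseq \<times> nmat \<times> nmat) \<times> nseq.
     cauchy_in (fst (snd (fst p))) (snd p) \<and> \<not> cauchy_in (snd (snd (fst p))) (\<lambda>m. fst (fst p) (snd p m))}"
  have cZ: "continuous_on UNIV (\<lambda>p :: (nseq \<times> nmat \<times> nmat) \<times> nseq. \<lambda>m. fst (fst p) (snd p m))"
  proof (rule continuous_on_coordinatewise_then_product)
    fix m
    show "continuous_on UNIV (\<lambda>p :: (nseq \<times> nmat \<times> nmat) \<times> nseq. fst (fst p) (snd p m))"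
      by (rule cont_app[OF continuous_on_fst[OF continuous_on_fst[OF continuous_on_id]]
          cont_coord[OF continuous_on_snd[OF continuous_on_id]]])
  qed
  have cd: "continuous_on UNIV (\<lambda>p :: (nseq \<times> nmat \<times> nmat) \<times> nseq. fst (snd (fst p)))"
    by (rule continuous_on_fst[OF continuous_on_snd[OF continuous_on_fst[OF continuous_on_id]]])
  have cd': "continuous_on UNIV (\<lambda>p :: (nseq \<times> nmat \<times> nmat) \<times> nseq. snd (snd (fst p)))"
    by (rule continuous_on_snd[OF continuous_on_snd[OF continuous_on_fst[OF continuous_on_id]]])
  have cz: "continuous_on UNIV (\<lambda>p :: (nseq \<times> nmat \<times> nmat) \<times> nseq. snd p)"
    by (rule continuous_on_snd[OF continuous_on_id])
  have g1: "gpi3 {p :: (nseq \<times> nmat \<times> nmat) \<times> nseq. cauchy_in (fst (snd (fst p))) (snd p)}"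
    by (rule gpi3_cauchy[OF cd cz])
  have g2: "gpi3 {p :: (nseq \<times> nmat \<times> nmat) \<times> nseq. cauchy_in (snd (snd (fst p))) (\<lambda>m. fst (fst p) (snd p m))}"
    by (rule gpi3_cauchy[OF cd' cZ])
  have "E = {p. cauchy_in (fst (snd (fst p))) (snd p)} \<inter>
     - {p :: (nseq \<times> nmat \<times> nmat) \<times> nseq. cauchy_in (snd (snd (fst p))) (\<lambda>m. fst (fst p) (snd p m))}"
    unfolding E_def by auto
  then have "E \<in> Sigma11" using sig_Int[OF gpi3_sig[OF g1] gpi3_compl_sig[OF g2]] by simp
  then have sE: "fst ` E \<in> Sigma11" by (rule sig_proj[OF param_id])
  have m1: "- {x :: nseq \<times> nmat \<times> nmat. metric_on_nat (fst (snd x))} \<in> Sigma11"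
    by (rule gpi3_compl_sig[OF gpi3_metric[OF continuous_on_fst[OF continuous_on_snd[OF continuous_on_id]]]])
  have m2: "- {x :: nseq \<times> nmat \<times> nmat. metric_on_nat (snd (snd x))} \<in> Sigma11"
    by (rule gpi3_compl_sig[OF gpi3_metric[OF continuous_on_snd[OF continuous_on_snd[OF continuous_on_id]]]])
  have "- C_omega = - {x :: nseq \<times> nmat \<times> nmat. metric_on_nat (fst (snd x))} \<union>
      - {x :: nseq \<times> nmat \<times> nmat. metric_on_nat (snd (snd x))} \<union> fst ` E"
  proof (rule set_eqI)
    fix x :: "nseq \<times> nmat \<times> nmat"
    have "x \<in> C_omega \<longleftrightarrow> metric_on_nat (fst (snd x)) \<and> metric_on_nat (snd (snd x)) \<and>
       cauchy_continuous_wrt (fst (snd x)) (snd (snd x)) (fst x)"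
      unfolding C_omega_def by (cases x) auto
    moreover have "x \<in> fst ` E \<longleftrightarrow> \<not> cauchy_continuous_wrt (fst (snd x)) (snd (snd x)) (fst x)"
      unfolding mem_fst_image E_def cauchy_continuous_wrt_def by (auto simp: o_def)
    ultimately show "x \<in> - C_omega \<longleftrightarrow> x \<in> - {x. metric_on_nat (fst (snd x))} \<union>
      - {x. metric_on_nat (snd (snd x))} \<union> fst ` E" by auto
  qed
  then show ?thesis using sig_Un[OF sig_Un[OF m1 m2] sE] by simp
qed

lemma partC: "C_omega \<in> Pi11"
  unfolding Pi11_def using partC_sig by simp

type_synonym xsp = "(nseq \<times> nseq) \<times> (nmat \<times> nmat \<times> nmat \<times> nmat)"

definition xg0 :: "xsp \<Rightarrow> nseq" where "xg0 x = fst (fst x)"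
definition xg1 :: "xsp \<Rightarrow> nseq" where "xg1 x = snd (fst x)"
definition xd0 :: "xsp \<Rightarrow> nmat" where "xd0 x = fst (snd x)"
definition xd0' :: "xsp \<Rightarrow> nmat" where "xd0' x = fst (snd (snd x))"
definition xd1 :: "xsp \<Rightarrow> nmat" where "xd1 x = fst (snd (snd (snd x)))"
definition xd1' :: "xsp \<Rightarrow> nmat" where "xd1' x = snd (snd (snd (snd x)))"

lemmas xsel_defs = xg0_def xg1_def xd0_def xd0'_def xd1_def xd1'_def

lemma xsel_cont:
  "continuous_on UNIV f \<Longrightarrow> continuous_on UNIV (\<lambda>p. xg0 (f p))"
  "continuous_on UNIV f \<Longrightarrow> continuous_on UNIV (\<lambda>p. xg1 (f p))"
  "continuous_on UNIV f \<Longrightarrow> continuous_on UNIV (\<lambda>p. xd0 (f p))"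
  "continuous_on UNIV f \<Longrightarrow> continuous_on UNIV (\<lambda>p. xd0' (f p))"
  "continuous_on UNIV f \<Longrightarrow> continuous_on UNIV (\<lambda>p. xd1 (f p))"
  "continuous_on UNIV f \<Longrightarrow> continuous_on UNIV (\<lambda>p. xd1' (f p))"
  unfolding xsel_defs by (intro continuous_on_fst continuous_on_snd; assumption)+

lemma rel_set_mem: "x \<in> rel_set R \<longleftrightarrow> R (xg0 x, xd0 x, xd0' x) (xg1 x, xd1 x, xd1' x)"
  unfolding rel_set_def xsel_defs by (simp add: case_prod_unfold)

definition P_rel :: "xsp set" where
  "P_rel = {x. (xg0 x, xd0 x, xd0' x) \<in> C_omega \<and> (xg1 x, xd1 x, xd1' x) \<in> C_omega}"

lemma P_rel_Pi: "P_rel \<in> Pi11"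
proof -
  have c0: "continuous_on UNIV (\<lambda>x. (xg0 x, xd0 x, xd0' x))"
    by (intro continuous_on_Pair xsel_cont continuous_on_id)
  have c1: "continuous_on UNIV (\<lambda>x. (xg1 x, xd1 x, xd1' x))"
    by (intro continuous_on_Pair xsel_cont continuous_on_id)
  have "- P_rel = (\<lambda>x. (xg0 x, xd0 x, xd0' x)) -` (- C_omega) \<union> (\<lambda>x. (xg1 x, xd1 x, xd1' x)) -` (- C_omega)"
    unfolding P_rel_def by auto
  then show ?thesis unfolding Pi11_def
    using sig_Un[OF sig_vimage[OF c0 partC_sig] sig_vimage[OF c1 partC_sig]] by simp
qed

definition E_le :: "(xsp \<times> (nseq \<times> nseq)) set" where
  "E_le = {p. dense_isometry (xd0 (fst p)) (xd1 (fst p)) (fst (snd p)) \<and>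
     dense_isometry (xd0' (fst p)) (xd1' (fst p)) (snd (snd p)) \<and>
     snd (snd p) \<circ> xg0 (fst p) = xg1 (fst p) \<circ> fst (snd p)}"

lemma E_le_gpi3: "gpi3 E_le"
proof -
  have cF: "continuous_on UNIV (\<lambda>p::xsp \<times> (nseq \<times> nseq). fst p)" by (rule continuous_on_fst[OF continuous_on_id])
  have cS: "continuous_on UNIV (\<lambda>p::xsp \<times> (nseq \<times> nseq). snd p)" by (rule continuous_on_snd[OF continuous_on_id])
  have i1: "continuous_on UNIV (\<lambda>p::xsp \<times> (nseq \<times> nseq). fst (snd p))" by (rule continuous_on_fst[OF cS])
  have i2: "continuous_on UNIV (\<lambda>p::xsp \<times> (nseq \<times> nseq). snd (snd p))" by (rule continuous_on_snd[OF cS])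
  show ?thesis unfolding E_le_def
    by (rule gpi3_conj[OF gpi3_dense[OF xsel_cont(3)[OF cF] xsel_cont(5)[OF cF] i1]
          gpi3_conj[OF gpi3_dense[OF xsel_cont(4)[OF cF] xsel_cont(6)[OF cF] i2]
          gpi3_closed[OF gc_commute[OF i1 i2 xsel_cont(1)[OF cF] xsel_cont(2)[OF cF]]]]])
qed

lemma partD: "\<exists>S P. S \<in> Sigma11 \<and> P \<in> Pi11 \<and> rel_set cdi_le = S \<inter> P"
proof (intro exI conjI)
  show "fst ` E_le \<in> Sigma11"
    by (rule sig_proj[OF param_prod[OF param_id param_id] gpi3_sig[OF E_le_gpi3]])
  show "P_rel \<in> Pi11" by (rule P_rel_Pi)
  show "rel_set cdi_le = fst ` E_le \<inter> P_rel"
  proof (rule set_eqI)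
    fix x
    show "x \<in> rel_set cdi_le \<longleftrightarrow> x \<in> fst ` E_le \<inter> P_rel"
      unfolding Int_iff rel_set_mem mem_fst_image E_le_def P_rel_def cdi_le_def by auto
  qed
qed

type_synonym wsp = "nseq \<times> nmat \<times> nmat \<times> nseq \<times> nseq \<times> nseq \<times> nseq"

definition wg :: "wsp \<Rightarrow> nseq" where "wg w = fst w"
definition wd :: "wsp \<Rightarrow> nmat" where "wd w = fst (snd w)"
definition wd' :: "wsp \<Rightarrow> nmat" where "wd' w = fst (snd (snd w))"
definition wi :: "wsp \<Rightarrow> nseq" where "wi w = fst (snd (snd (snd w)))"
definition wi' :: "wsp \<Rightarrow> nseq" where "wi' w = fst (snd (snd (snd (snd w))))"
definition wk :: "wsp \<Rightarrow> nseq" where "wk w = fst (snd (snd (snd (snd (snd w)))))"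
definition wk' :: "wsp \<Rightarrow> nseq" where "wk' w = snd (snd (snd (snd (snd (snd w)))))"

lemmas wsel_defs = wg_def wd_def wd'_def wi_def wi'_def wk_def wk'_def

lemma wsel_cont:
  "continuous_on UNIV f \<Longrightarrow> continuous_on UNIV (\<lambda>p. wg (f p))"
  "continuous_on UNIV f \<Longrightarrow> continuous_on UNIV (\<lambda>p. wd (f p))"
  "continuous_on UNIV f \<Longrightarrow> continuous_on UNIV (\<lambda>p. wd' (f p))"
  "continuous_on UNIV f \<Longrightarrow> continuous_on UNIV (\<lambda>p. wi (f p))"
  "continuous_on UNIV f \<Longrightarrow> continuous_on UNIV (\<lambda>p. wi' (f p))"
  "continuous_on UNIV f \<Longrightarrow> continuous_on UNIV (\<lambda>p. wk (f p))"
  "continuous_on UNIV f \<Longrightarrow> continuous_on UNIV (\<lambda>p. wk' (f p))"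
  unfolding wsel_defs by (intro continuous_on_fst continuous_on_snd; assumption)+

definition Econd :: "xsp \<Rightarrow> wsp \<Rightarrow> bool" where
  "Econd x w \<longleftrightarrow> metric_on_nat (wd w) \<and> metric_on_nat (wd' w) \<and>
     dense_isometry (xd0 x) (wd w) (wi w) \<and> dense_isometry (xd0' x) (wd' w) (wi' w) \<and>
     wi' w \<circ> xg0 x = wg w \<circ> wi w \<and>
     dense_isometry (xd1 x) (wd w) (wk w) \<and> dense_isometry (xd1' x) (wd' w) (wk' w) \<and>
     wk' w \<circ> xg1 x = wg w \<circ> wk w \<and> approxA' (wg w) (wd w) (wd' w) (wi w)"

definition E_ap :: "(xsp \<times> wsp) set" where
  "E_ap = {p. Econd (fst p) (snd p)}"

lemma E_ap_gpi3: "gpi3 E_ap"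
proof -
  have cF: "continuous_on UNIV (\<lambda>p::xsp \<times> wsp. fst p)" by (rule continuous_on_fst[OF continuous_on_id])
  have cS: "continuous_on UNIV (\<lambda>p::xsp \<times> wsp. snd p)" by (rule continuous_on_snd[OF continuous_on_id])
  note X = xsel_cont[OF cF] and W = wsel_cont[OF cS]
  show ?thesis unfolding E_ap_def Econd_def
    by (rule gpi3_conj[OF gpi3_metric[OF W(2)] gpi3_conj[OF gpi3_metric[OF W(3)]
      gpi3_conj[OF gpi3_dense[OF X(3) W(2) W(4)] gpi3_conj[OF gpi3_dense[OF X(4) W(3) W(5)]
      gpi3_conj[OF gpi3_closed[OF gc_commute[OF W(4) W(5) X(1) W(1)]]
      gpi3_conj[OF gpi3_dense[OF X(5) W(2) W(6)] gpi3_conj[OF gpi3_dense[OF X(6) W(3) W(7)]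
      gpi3_conj[OF gpi3_closed[OF gc_commute[OF W(6) W(7) X(2) W(1)]]
      gpi3_approxA[OF W(2) W(3) W(1) W(4)]]]]]]]]])
qed

lemma param_w: "\<exists>\<tau> :: nseq \<Rightarrow> wsp. param \<tau>"
  using param_prod[OF param_id param_prod[OF param_nmat param_prod[OF param_nmat
        param_prod[OF param_id param_prod[OF param_id param_prod[OF param_id param_id]]]]]]
  by blast

lemma approx_iff:
  "x \<in> rel_set cdi_approx \<longleftrightarrow> (\<exists>w. Econd x w) \<and> x \<in> P_rel"
proof
  assume "x \<in> rel_set cdi_approx"
  then have H: "cdi_approx (xg0 x, xd0 x, xd0' x) (xg1 x, xd1 x, xd1' x)" by (simp add: rel_set_mem)
  then have P: "x \<in> P_rel" unfolding cdi_approx_def P_rel_def by simp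
  from H obtain g d d' where r: "(g, d, d') \<in> C_omega"
    and l1: "cdi_le (xg0 x, xd0 x, xd0' x) (g, d, d')" and l2: "cdi_le (xg1 x, xd1 x, xd1' x) (g, d, d')"
    unfolding cdi_approx_def by auto
  from l1 obtain i i' where i: "dense_isometry (xd0 x) d i" "dense_isometry (xd0' x) d' i'"
    "i' \<circ> xg0 x = g \<circ> i" unfolding cdi_le_def by auto
  from l2 obtain k k' where k: "dense_isometry (xd1 x) d k" "dense_isometry (xd1' x) d' k'"
    "k' \<circ> xg1 x = g \<circ> k" unfolding cdi_le_def by auto
  have m: "metric_on_nat d" "metric_on_nat d'" "cauchy_continuous_wrt d d' g"
    using r unfolding C_omega_def by auto
  have A: "approxA' g d d' i" by (rule cc_approxA[OF m i(1)])
  have "Econd x (g, d, d', i, i', k, k')"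
    unfolding Econd_def wsel_defs using m i k A by simp
  then show "(\<exists>w. Econd x w) \<and> x \<in> P_rel" using P by blast
next
  assume "(\<exists>w. Econd x w) \<and> x \<in> P_rel"
  then obtain w where E: "Econd x w" and P: "x \<in> P_rel" by blast
  have p0: "(xg0 x, xd0 x, xd0' x) \<in> C_omega" and p1: "(xg1 x, xd1 x, xd1' x) \<in> C_omega"
    using P unfolding P_rel_def by auto
  have cc0: "cauchy_continuous_wrt (xd0 x) (xd0' x) (xg0 x)" using p0 unfolding C_omega_def by simp
  have m: "metric_on_nat (wd w)" "metric_on_nat (wd' w)" using E unfolding Econd_def by auto
  have "cauchy_continuous_wrt (wd w) (wd' w) (wg w)"
    using E unfolding Econd_def dense_isometry_def
    by (intro approxA_cc[OF m cc0, of "wi w" "wi' w"]) auto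
  then have r: "(wg w, wd w, wd' w) \<in> C_omega" unfolding C_omega_def using m by simp
  have "cdi_le (xg0 x, xd0 x, xd0' x) (wg w, wd w, wd' w)"
    unfolding cdi_le_def using p0 r E unfolding Econd_def by auto
  moreover have "cdi_le (xg1 x, xd1 x, xd1' x) (wg w, wd w, wd' w)"
    unfolding cdi_le_def using p1 r E unfolding Econd_def by auto
  ultimately have "cdi_approx (xg0 x, xd0 x, xd0' x) (xg1 x, xd1 x, xd1' x)"
    unfolding cdi_approx_def using p0 p1 r by blast
  then show "x \<in> rel_set cdi_approx" by (simp add: rel_set_mem)
qed

lemma partE: "\<exists>S P. S \<in> Sigma11 \<and> P \<in> Pi11 \<and> rel_set cdi_approx = S \<inter> P"
proof (intro exI conjI)
  obtain \<tau> :: "nseq \<Rightarrow> wsp" where t: "param \<tau>" using param_w by blast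
  show "fst ` E_ap \<in> Sigma11"
    by (rule sig_proj[OF t gpi3_sig[OF E_ap_gpi3]])
  show "P_rel \<in> Pi11" by (rule P_rel_Pi)
  show "rel_set cdi_approx = fst ` E_ap \<inter> P_rel"
    unfolding set_eq_iff Int_iff approx_iff mem_fst_image E_ap_def by simp
qed

theorem theorem4p6:
  shows "(({(z, d). metric_on_nat d \<and> cauchy_in d z} :: (nseq \<times> nmat) set) \<in> Borel_Pi 3)
    \<and> (({(g, d, d'). metric_on_nat d \<and> metric_on_nat d' \<and> continuous_wrt d d' g}
            :: (nseq \<times> nmat \<times> nmat) set) \<in> Borel_Pi 3)
    \<and> C_omega \<in> Pi11
    \<and> (\<exists>S P. S \<in> Sigma11 \<and> P \<in> Pi11 \<and> rel_set cdi_le = S \<inter> P)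
    \<and> (\<exists>S P. S \<in> Sigma11 \<and> P \<in> Pi11 \<and> rel_set cdi_approx = S \<inter> P)"
  using partA partB partC partD partE by blast

end
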